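(* Assume the triangulation satisfies the Xu–Zikatanov (Delaunay) condition. There exist constants $C_0,C_1>0$ depending only on the shape-regularity of the mesh such that, if $\gamma_0>C_0\sigma h_E+C_1\|\mathbf b\|_{L^\infty(\Omega)}$ for all $E\in\mathcal{E}_h$, then $\tilde a(\cdot;\cdot)$ satisfies the weak DMP property: for every $u_h\in\mathcal{V}_h$ and every interior node $x_i$ such that $u_h(x_i)\le u_h(x)$ for all $x\in\Omega_i$ and $u_h(x_i)<0$, there exist negative numbers $(c_E)_{E\in\mathcal{E}_i}$ with $$\tilde a(u_h;\psi_i)\le\sum_{E\in\mathcal{E}_i}c_E\,\big|\partial_{\mathbf t}u_h|_E\big|;$$ and symmetrically, if $u_h(x_i)\ge u_h(x)$ for all $x\in\Omega_i$ and $u_h(x_i)>0$, there exist negative $(c_E)$ with $\tilde a(u_h;\psi_i)\ge-\sum_{E\in\mathcal{E}_i}c_E|\partial_{\mathbf t}u_h|_E|$. If $\sigma=0$, the sign conditions $u_h(x_i)<0$ (resp. $>0$) can be dropped (strong DMP property).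
   Context: Setting: $\Omega\subset\mathbb{R}^2$ open bounded polygonal with Lipschitz boundary; $\varepsilon>0$, $\mathbf b\in L^\infty(\Omega)^2$ divergence-free, $\sigma\ge0$ constant; $a(u,v)=\varepsilon(\nabla u,\nabla v)_\Omega+(\mathbf b\cdot\nabla u,v)_\Omega+\sigma(u,v)_\Omega$. $\mathcal{T}_h$ is a conforming triangulation from a shape-regular family, into triangles, with nodes $x_i$ and nodal basis functions $\psi_i$; $\mathcal{V}_h$ the continuous piecewise affine space. $\mathcal{E}_h$: interior edges, $h_E=|E|$, $\partial_{\mathbf t}$ tangential derivative on $E$. For an interior node $x_i$: $\mathcal{E}_i=\{E\in\mathcal{E}_h:x_i\in E\}$, $\Omega_i$ = union of triangles containing $x_i$, $S_i=\{j\neq i:x_j\text{ shares an interior edge with }x_i\}$. $\xi_{w_h}\in\mathcal{V}_h$ has nodal values $\big|\sum_{j\in S_i}(w_h(x_i)-w_h(x_j))\big|/\sum_{j\in S_i}|w_h(x_i)-w_h(x_j)|$ (0 if the denominator vanishes); $\alpha_E(w_h)=\max_{x\in E}[\xi_{w_h}(x)]^p$ for fixed $p\in[1,\infty)$; $d_h(w_h;u_h,v_h)=\sum_{E\in\mathcal{E}_h}\gamma_0h_E^2\alpha_E(w_h)\int_E\partial_{\mathbf t}u_h\partial_{\mathbf t}v_h\,ds$ with $\gamma_0>0$; $\tilde a(w_h;v_h)=a(w_h,v_h)+d_h(w_h;w_h,v_h)$. Xu–Zikatanov condition (in 2D the Delaunay condition): for every interior edge $E$, the sum of the cotangents of the two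 angles opposite to $E$ in the two triangles sharing $E$ is nonnegative. *)

theory Defs
  imports "HOL-Analysis.Analysis" "HOL-Probability.Essential_Supremum"
begin

type_synonym pt = "real^2"

text \<open>A triangle is represented by its set of three (affinely independent) vertices;
  the closed triangle is its convex hull.\<close>

definition conforming_triangulation :: "pt set set \<Rightarrow> bool" where
  "conforming_triangulation \<T> \<longleftrightarrow> finite \<T> \<and> \<T> \<noteq> {} \<and>
     (\<forall>T\<in>\<T>. card T = 3 \<and> \<not> affine_dependent T) \<and>
     (\<forall>T1\<in>\<T>. \<forall>T2\<in>\<T>. convex hull T1 \<inter> convex hull T2 = convex hull (T1 \<inter> T2))"

definition dom_of :: "pt set set \<Rightarrow> pt set" where
  "dom_of \<T> = interior (\<Union>T\<in>\<T>. convex hull T)"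

definition nodes :: "pt set set \<Rightarrow> pt set" where
  "nodes \<T> = \<Union>\<T>"

definition interior_node :: "pt set set \<Rightarrow> pt \<Rightarrow> bool" where
  "interior_node \<T> x \<longleftrightarrow> x \<in> nodes \<T> \<and> x \<in> dom_of \<T>"

definition edges :: "pt set set \<Rightarrow> pt set set" where
  "edges \<T> = {E. card E = 2 \<and> (\<exists>T\<in>\<T>. E \<subseteq> T)}"

definition int_edges :: "pt set set \<Rightarrow> pt set set" where
  "int_edges \<T> = {E\<in>edges \<T>. card {T\<in>\<T>. E \<subseteq> T} = 2}"

definition edges_at :: "pt set set \<Rightarrow> pt \<Rightarrow> pt set set" where
  "edges_at \<T> x = {E\<in>int_edges \<T>. x \<in> E}"

definition nbrs :: "pt set set \<Rightarrow> pt \<Rightarrow> pt set" where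
  "nbrs \<T> x = {y. y \<noteq> x \<and> {x, y} \<in> int_edges \<T>}"

definition patch :: "pt set set \<Rightarrow> pt \<Rightarrow> pt set" where
  "patch \<T> x = (\<Union>T\<in>{T\<in>\<T>. x \<in> T}. convex hull T)"

definition hE :: "pt set \<Rightarrow> real" where
  "hE E = (SOME h. \<exists>a b. E = {a, b} \<and> h = dist a b)"

definition Vh :: "pt set set \<Rightarrow> (pt \<Rightarrow> real) set" where
  "Vh \<T> = {w. continuous_on (\<Union>T\<in>\<T>. convex hull T) w \<and>
     (\<forall>T\<in>\<T>. \<exists>g c. \<forall>x\<in>convex hull T. w x = g \<bullet> x + c)}"

definition tgrad :: "pt set \<Rightarrow> (pt \<Rightarrow> real) \<Rightarrow> pt" where
  "tgrad T w = (THE g. \<exists>c. \<forall>x\<in>convex hull T. w x = g \<bullet> x + c)"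

definition a_form :: "pt set set \<Rightarrow> real \<Rightarrow> (pt \<Rightarrow> pt) \<Rightarrow> real \<Rightarrow>
    (pt \<Rightarrow> real) \<Rightarrow> (pt \<Rightarrow> real) \<Rightarrow> real" where
  "a_form \<T> \<epsilon> b \<sigma> u v = (\<Sum>T\<in>\<T>.
      \<epsilon> * (LINT x:convex hull T|lebesgue. tgrad T u \<bullet> tgrad T v)
    + (LINT x:convex hull T|lebesgue. (b x \<bullet> tgrad T u) * v x)
    + \<sigma> * (LINT x:convex hull T|lebesgue. u x * v x))"

text \<open>Tangential derivative data on an edge \<open>E = {a,b}\<close>:
  \<open>\<integral>_E \<partial>_t u \<partial>_t v ds\<close> and \<open>|\<partial>_t u|_E|\<close> for piecewise affine \<open>u, v\<close>
  (on the segment these functions are affine, so \<open>\<partial>_t\<close> is constant).\<close>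
definition edge_int_tt :: "pt set \<Rightarrow> (pt \<Rightarrow> real) \<Rightarrow> (pt \<Rightarrow> real) \<Rightarrow> real" where
  "edge_int_tt E u v = (SOME r. \<exists>a b. E = {a, b} \<and>
      r = dist a b * (((u b - u a) / dist a b) * ((v b - v a) / dist a b)))"

definition abs_tder :: "pt set \<Rightarrow> (pt \<Rightarrow> real) \<Rightarrow> real" where
  "abs_tder E u = (SOME r. \<exists>a b. E = {a, b} \<and> r = \<bar>u b - u a\<bar> / dist a b)"

definition xi_node :: "pt set set \<Rightarrow> (pt \<Rightarrow> real) \<Rightarrow> pt \<Rightarrow> real" where
  "xi_node \<T> w x = (let D = (\<Sum>y\<in>nbrs \<T> x. \<bar>w x - w y\<bar>) in
     if D = 0 then 0 else \<bar>\<Sum>y\<in>nbrs \<T> x. (w x - w y)\<bar> / D)"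

text \<open>\<open>\<alpha>_E(w) = max_{x\<in>E} \<xi>_w(x)^p\<close>; on \<open>E = [a,b]\<close> the P1 function \<open>\<xi>_w\<close> is
  the linear interpolant of its endpoint values.\<close>
definition alpha_E :: "pt set set \<Rightarrow> real \<Rightarrow> (pt \<Rightarrow> real) \<Rightarrow> pt set \<Rightarrow> real" where
  "alpha_E \<T> p w E = (SOME r. \<exists>a b. E = {a, b} \<and>
     r = (SUP t\<in>{0..1}. ((1 - t) * xi_node \<T> w a + t * xi_node \<T> w b) powr p))"

definition d_form :: "pt set set \<Rightarrow> real \<Rightarrow> real \<Rightarrow> (pt \<Rightarrow> real) \<Rightarrow>
    (pt \<Rightarrow> real) \<Rightarrow> (pt \<Rightarrow> real) \<Rightarrow> real" where
  "d_form \<T> \<gamma>0 p w u v = (\<Sum>E\<in>int_edges \<T>.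
      \<gamma>0 * (hE E)\<^sup>2 * alpha_E \<T> p w E * edge_int_tt E u v)"

definition a_tilde :: "pt set set \<Rightarrow> real \<Rightarrow> (pt \<Rightarrow> pt) \<Rightarrow> real \<Rightarrow> real \<Rightarrow> real \<Rightarrow>
    (pt \<Rightarrow> real) \<Rightarrow> (pt \<Rightarrow> real) \<Rightarrow> real" where
  "a_tilde \<T> \<epsilon> b \<sigma> \<gamma>0 p w v = a_form \<T> \<epsilon> b \<sigma> w v + d_form \<T> \<gamma>0 p w w v"

definition angle_at :: "pt \<Rightarrow> pt \<Rightarrow> pt \<Rightarrow> real" where
  "angle_at c a b = arccos (((a - c) \<bullet> (b - c)) / (norm (a - c) * norm (b - c)))"

definition xu_zikatanov :: "pt set set \<Rightarrow> bool" where
  "xu_zikatanov \<T> \<longleftrightarrow> (\<forall>T1\<in>\<T>. \<forall>T2\<in>\<T>. \<forall>a b c d.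
      T1 \<noteq> T2 \<and> T1 = {a, b, c} \<and> T2 = {a, b, d} \<and> a \<noteq> b \<and> c \<notin> {a, b} \<and> d \<notin> {a, b}
      \<longrightarrow> cot (angle_at c a b) + cot (angle_at d a b) \<ge> 0)"

definition shape_regular :: "real \<Rightarrow> pt set set \<Rightarrow> bool" where
  "shape_regular \<kappa> \<T> \<longleftrightarrow> (\<forall>T\<in>\<T>. (diameter (convex hull T))\<^sup>2 \<le> \<kappa> * measure lebesgue (convex hull T))"

definition Linf_field :: "pt set \<Rightarrow> (pt \<Rightarrow> pt) \<Rightarrow> bool" where
  "Linf_field \<Omega> b \<longleftrightarrow> b \<in> borel_measurable (restrict_space lebesgue \<Omega>) \<and>
     esssup (restrict_space lebesgue \<Omega>) (\<lambda>x. ereal (norm (b x))) < \<infinity>"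

definition Linf_norm :: "pt set \<Rightarrow> (pt \<Rightarrow> pt) \<Rightarrow> real" where
  "Linf_norm \<Omega> b = real_of_ereal (esssup (restrict_space lebesgue \<Omega>) (\<lambda>x. ereal (norm (b x))))"

definition div_free :: "pt set \<Rightarrow> (pt \<Rightarrow> pt) \<Rightarrow> bool" where
  "div_free \<Omega> b \<longleftrightarrow> (\<forall>\<phi> G. (\<forall>x. (\<phi> has_derivative (\<lambda>h. G x \<bullet> h)) (at x)) \<and> continuous_on UNIV G \<and>
      compact (closure {x. \<phi> x \<noteq> 0}) \<and> closure {x. \<phi> x \<noteq> 0} \<subseteq> \<Omega>
      \<longrightarrow> (LINT x:\<Omega>|lebesgue. b x \<bullet> G x) = 0)"

end

theory Submission
  imports Defs
begin


definition cr :: "pt \<Rightarrow> pt \<Rightarrow> real" where "cr u v = u$1 * v$2 - u$2 * v$1"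

lemma inner2: "(u::pt) \<bullet> v = u$1 * v$1 + u$2 * v$2"
  by (simp add: inner_vec_def sum_2)

lemma vec2_eq: "(u::pt) = v \<longleftrightarrow> u$1 = v$1 \<and> u$2 = v$2"
  by (simp add: vec_eq_iff forall_2)

lemma norm2sq: "(norm (u::pt))\<^sup>2 = (u$1)\<^sup>2 + (u$2)\<^sup>2"
  by (simp only: power2_norm_eq_inner inner2) (simp add: power2_eq_square)

lemma area_tri: "measure lebesgue (convex hull {a,b,c::pt}) = \<bar>cr (b-a) (c-a)\<bar> / 2"
proof -
  have cl: "convex hull {a,b,c} \<in> sets borel"
    by (intro borel_closed compact_imp_closed finite_imp_compact_convex_hull) auto
  have "measure lebesgue (convex hull {a,b,c}) = measure lborel (convex hull {a,b,c})"
    using cl by simp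
  also have "\<dots> = \<bar>cr (b-a) (c-a)\<bar> / 2" unfolding content_triangle cr_def
    by (simp add: abs_minus_commute algebra_simps)
  finally show ?thesis .
qed

lemma lagrange: "(cr e f)\<^sup>2 + (e \<bullet> f)\<^sup>2 = (norm e)\<^sup>2 * (norm f)\<^sup>2"
  unfolding cr_def inner2 norm2sq by algebra

lemma cr_le: "\<bar>cr e f\<bar> \<le> norm e * norm f"
proof -
  have "(cr e f)\<^sup>2 \<le> (norm e)\<^sup>2 * (norm f)\<^sup>2" using lagrange[of e f] zero_le_power2[of "e \<bullet> f"]
    by linarith
  also have "\<dots> = (norm e * norm f)\<^sup>2" by (simp add: power_mult_distrib)
  finally have "\<bar>cr e f\<bar> \<le> \<bar>norm e * norm f\<bar>" using abs_le_square_iff by blast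
  thus ?thesis by simp
qed

lemma bary0:
  "cr (b-a) (c-a) *\<^sub>R p = (cr (b-a) (c-a) - cr (p-a) (c-a) - cr (b-a) (p-a)) *\<^sub>R a
     + (cr (p-a) (c-a)) *\<^sub>R b + (cr (b-a) (p-a)) *\<^sub>R c"
  unfolding vec2_eq cr_def by (simp add: algebra_simps)

lemma bary_coord:
  assumes "u + v + w = 1"
  shows "cr ((u *\<^sub>R a + v *\<^sub>R b + w *\<^sub>R c) - a) (c-a) = v * cr (b-a) (c-a)"
    and "cr (b-a) ((u *\<^sub>R a + v *\<^sub>R b + w *\<^sub>R c) - a) = w * cr (b-a) (c-a)"
proof -
  have u: "u = 1 - v - w" using assms by simp
  show "cr ((u *\<^sub>R a + v *\<^sub>R b + w *\<^sub>R c) - a) (c-a) = v * cr (b-a) (c-a)"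
    unfolding u cr_def by (simp add: algebra_simps)
  show "cr (b-a) ((u *\<^sub>R a + v *\<^sub>R b + w *\<^sub>R c) - a) = w * cr (b-a) (c-a)"
    unfolding u cr_def by (simp add: algebra_simps)
qed



lemma hull3: "p \<in> convex hull {a,b,c} \<longleftrightarrow>
  (\<exists>u v w. 0 \<le> u \<and> 0 \<le> v \<and> 0 \<le> w \<and> u + v + w = 1 \<and> p = u *\<^sub>R a + v *\<^sub>R b + w *\<^sub>R c)"
  unfolding convex_hull_3 by blast

lemma affine_eval:
  assumes "\<forall>q\<in>convex hull {a,b,c}. f q = g \<bullet> q + k" "u + v + w = 1"
    "0 \<le> u" "0 \<le> v" "0 \<le> w"
  shows "f (u *\<^sub>R a + v *\<^sub>R b + w *\<^sub>R c) = u * f a + v * f b + w * f c"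
proof -
  have abc: "a \<in> convex hull {a,b,c}" "b \<in> convex hull {a,b,c}" "c \<in> convex hull {a,b,c}"
    by (auto intro: hull_inc)
  have p: "u *\<^sub>R a + v *\<^sub>R b + w *\<^sub>R c \<in> convex hull {a,b,c}" using assms(2-) hull3 by blast
  have "f (u *\<^sub>R a + v *\<^sub>R b + w *\<^sub>R c) = u * (g \<bullet> a) + v * (g \<bullet> b) + w * (g \<bullet> c) + k"
    using assms(1) p by (simp add: inner_add_right)
  also have "\<dots> = u * (g \<bullet> a) + v * (g \<bullet> b) + w * (g \<bullet> c) + (u+v+w) * k" using assms(2) by simp
  also have "\<dots> = u * (g \<bullet> a + k) + v * (g \<bullet> b + k) + w * (g \<bullet> c + k)" by (simp add: algebra_simps)
  also have "\<dots> = u * f a + v * f b + w * f c" using assms(1) abc by simp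
  finally show ?thesis .
qed

lemma grad_unique:
  assumes "cr e f \<noteq> 0" "g \<bullet> e = h \<bullet> e" "g \<bullet> f = h \<bullet> f"
  shows "g = h"
proof -
  have i1: "cr e f * (g$1 - h$1) = f$2 * (g \<bullet> e - h \<bullet> e) - e$2 * (g \<bullet> f - h \<bullet> f)"
    unfolding cr_def inner2 by (simp add: algebra_simps)
  have i2: "cr e f * (g$2 - h$2) = e$1 * (g \<bullet> f - h \<bullet> f) - f$1 * (g \<bullet> e - h \<bullet> e)"
    unfolding cr_def inner2 by (simp add: algebra_simps)
  from i1 i2 assms show ?thesis unfolding vec2_eq by auto
qed

lemma cr_shift: "cr (x - z) (y - z) = cr (y - x) (z - x)"
  unfolding cr_def by (simp add: algebra_simps)

lemma tgrad_eq:
  assumes "cr (b-a) (c-a) \<noteq> 0" "\<forall>q\<in>convex hull {a,b,c}. w q = g \<bullet> q + k"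
  shows "tgrad {a,b,c} w = g"
  unfolding tgrad_def
proof (rule the_equality)
  show "\<exists>c'. \<forall>x\<in>convex hull {a, b, c}. w x = g \<bullet> x + c'" using assms(2) by blast
next
  fix g' assume "\<exists>c'. \<forall>x\<in>convex hull {a, b, c}. w x = g' \<bullet> x + c'"
  then obtain k' where k': "\<forall>x\<in>convex hull {a, b, c}. w x = g' \<bullet> x + k'" by blast
  have abc: "a \<in> convex hull {a,b,c}" "b \<in> convex hull {a,b,c}" "c \<in> convex hull {a,b,c}"
    by (auto intro: hull_inc)
  have "w a = g \<bullet> a + k" "w b = g \<bullet> b + k" "w c = g \<bullet> c + k"
    "w a = g' \<bullet> a + k'" "w b = g' \<bullet> b + k'" "w c = g' \<bullet> c + k'"
    using k' assms(2) abc by auto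
  hence "g' \<bullet> (b-a) = g \<bullet> (b-a)" "g' \<bullet> (c-a) = g \<bullet> (c-a)"
    by (auto simp: inner_diff_right)
  then show "g' = g" using grad_unique assms(1) by blast
qed

lemma gram:
  "(g \<bullet> h) * (cr e f)\<^sup>2 = (g \<bullet> e) * (h \<bullet> e) * (f \<bullet> f) + (g \<bullet> f) * (h \<bullet> f) * (e \<bullet> e)
     - ((g \<bullet> e) * (h \<bullet> f) + (g \<bullet> f) * (h \<bullet> e)) * (e \<bullet> f)"
  unfolding cr_def inner2 by (simp add: power2_eq_square algebra_simps)

lemma gnorm_id: "(norm g)\<^sup>2 * (cr e f)\<^sup>2 = (norm ((g \<bullet> e) *\<^sub>R f - (g \<bullet> f) *\<^sub>R e))\<^sup>2"
  unfolding norm2sq cr_def inner2 by (simp add: power2_eq_square algebra_simps)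

lemma gnorm_bound: "norm g * \<bar>cr e f\<bar> \<le> \<bar>g \<bullet> e\<bar> * norm f + \<bar>g \<bullet> f\<bar> * norm e"
proof -
  have "norm g * \<bar>cr e f\<bar> = norm ((g \<bullet> e) *\<^sub>R f - (g \<bullet> f) *\<^sub>R e)"
  proof -
    have "(norm g * \<bar>cr e f\<bar>)\<^sup>2 = (norm ((g \<bullet> e) *\<^sub>R f - (g \<bullet> f) *\<^sub>R e))\<^sup>2"
      using gnorm_id[of g e f] by (simp add: power_mult_distrib)
    thus ?thesis by (rule power2_eq_imp_eq) auto
  qed
  also have "\<dots> \<le> norm ((g \<bullet> e) *\<^sub>R f) + norm ((g \<bullet> f) *\<^sub>R e)" by (rule norm_triangle_ineq4)
  finally show ?thesis by simp
qed

lemma cot_formula: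
  assumes D: "cr (y-x) (z-x) \<noteq> 0"
  shows "cot (angle_at z x y) = ((x-z) \<bullet> (y-z)) / \<bar>cr (y-x) (z-x)\<bar>"
proof -
  define n1 where "n1 = norm (x - z)"
  define n2 where "n2 = norm (y - z)"
  define d where "d = (x-z) \<bullet> (y-z)"
  define t where "t = d / (n1 * n2)"
  have xz: "x \<noteq> z" using D unfolding cr_def by auto
  have yz: "y \<noteq> z" using D unfolding cr_def by (auto simp: algebra_simps)
  have n1: "n1 > 0" "n2 > 0" using xz yz by (auto simp: n1_def n2_def)
  have lag: "(cr (y-x) (z-x))\<^sup>2 + d\<^sup>2 = n1\<^sup>2 * n2\<^sup>2"
    using lagrange[of "x-z" "y-z"] cr_shift[of x z y] unfolding d_def n1_def n2_def by simp
  have t1: "1 - t\<^sup>2 = (cr (y-x) (z-x))\<^sup>2 / (n1 * n2)\<^sup>2"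
    using lag n1 unfolding t_def by (simp add: field_simps power2_eq_square)
  have tb: "t\<^sup>2 \<le> 1" using t1 by (metis diff_ge_0_iff_ge divide_nonneg_nonneg zero_le_power2)
  hence tb': "-1 \<le> t" "t \<le> 1" using abs_le_square_iff[of t 1] by auto
  have s: "sin (arccos t) = \<bar>cr (y-x) (z-x)\<bar> / (n1 * n2)"
    using sin_arccos[OF tb'] t1 n1 by (simp add: real_sqrt_divide)
  have "angle_at z x y = arccos t" unfolding angle_at_def t_def d_def n1_def n2_def ..
  hence "cot (angle_at z x y) = t / (\<bar>cr (y-x) (z-x)\<bar> / (n1 * n2))"
    using s cos_arccos[OF tb'] by (simp add: cot_def)
  also have "\<dots> = d / \<bar>cr (y-x) (z-x)\<bar>" using n1 unfolding t_def by (simp add: field_simps)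
  finally show ?thesis unfolding d_def .
qed



lemma cr_lin1: "cr (s *\<^sub>R u + t *\<^sub>R v) w = s * cr u w + t * cr v w"
  unfolding cr_def by (simp add: algebra_simps)
lemma cr_lin2: "cr w (s *\<^sub>R u + t *\<^sub>R v) = s * cr w u + t * cr w v"
  unfolding cr_def by (simp add: algebra_simps)
lemma cr_self: "cr u u = 0" unfolding cr_def by simp
lemma cr_swap: "cr u v = - cr v u" unfolding cr_def by simp

lemma coords_unique:
  assumes D: "cr (b-a) (c-a) \<noteq> 0" and s: "u + v + w = 1" "u' + v' + w' = 1"
    and e: "u *\<^sub>R a + v *\<^sub>R b + w *\<^sub>R c = u' *\<^sub>R a + v' *\<^sub>R b + w' *\<^sub>R c"
  shows "v = v'" "w = w'"
proof -
  have e2: "cr ((u *\<^sub>R a + v *\<^sub>R b + w *\<^sub>R c) - a) (c-a) = cr ((u' *\<^sub>R a + v' *\<^sub>R b + w' *\<^sub>R c) - a) (c-a)"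
    "cr (b-a) ((u *\<^sub>R a + v *\<^sub>R b + w *\<^sub>R c) - a) = cr (b-a) ((u' *\<^sub>R a + v' *\<^sub>R b + w' *\<^sub>R c) - a)"
    using e by simp_all
  show "v = v'" using e2(1) D unfolding bary_coord(1)[OF s(1)] bary_coord(1)[OF s(2)] by simp
  show "w = w'" using e2(2) D unfolding bary_coord(2)[OF s(1)] bary_coord(2)[OF s(2)] by simp
qed

lemma scale_div:
  assumes "D \<noteq> 0" "D *\<^sub>R p = A *\<^sub>R a + B *\<^sub>R b + C *\<^sub>R (c::pt)"
  shows "p = (A/D) *\<^sub>R a + (B/D) *\<^sub>R b + (C/D) *\<^sub>R c"
proof -
  have "p = (1/D) *\<^sub>R (D *\<^sub>R p)" using assms(1) by simp
  also have "\<dots> = (A/D) *\<^sub>R a + (B/D) *\<^sub>R b + (C/D) *\<^sub>R c"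
    unfolding assms(2) by (simp add: scaleR_add_right)
  finally show ?thesis .
qed

lemma ar1: fixes t A B :: real
  assumes  "- B \<le> A" "B \<le> 1 / 4" "t \<le> 1/4"
  shows "0 \<le> (1 - t) / 2 + A"
  using assms by (simp add: field_simps)
lemma ar3: fixes t A B C :: real
  assumes  "A \<le> B" "B \<le> 1 / 4" "C \<le> 1/4" "0 \<le> t"
  shows "0 \<le> 1 - ((1 - t) / 2 + A) - C"
  using assms by (simp add: field_simps)

lemma tri_card3:
  assumes "conforming_triangulation \<T>" "T \<in> \<T>"
  shows "card T = 3" "finite T"
  using assms unfolding conforming_triangulation_def by (auto intro: card_ge_0_finite)

lemma tri_split:
  assumes "conforming_triangulation \<T>" "T \<in> \<T>" "x \<in> T" "y \<in> T" "x \<noteq> y"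
  shows "\<exists>z. T = {x,y,z} \<and> z \<noteq> x \<and> z \<noteq> y"
proof -
  from tri_card3[OF assms(1,2)] obtain a b c where T: "T = {a,b,c}" "a \<noteq> b" "b \<noteq> c" "a \<noteq> c"
    using card_3_iff by metis
  then show ?thesis using assms(3-5) by (auto simp: insert_commute)
qed

lemma tri_split1:
  assumes "conforming_triangulation \<T>" "T \<in> \<T>" "x \<in> T"
  shows "\<exists>y z. T = {x,y,z} \<and> y \<noteq> x \<and> z \<noteq> x \<and> y \<noteq> z"
proof -
  from tri_card3[OF assms(1,2)] obtain a b c where T: "T = {a,b,c}" "a \<noteq> b" "b \<noteq> c" "a \<noteq> c"
    using card_3_iff by metis
  then show ?thesis using assms(3) by (auto simp: insert_commute)
qed

lemma hull_bounded: "bounded (convex hull {a,b,c::pt})"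
  by (simp add: finite_imp_bounded_convex_hull)

lemma tri_nondeg:
  assumes "shape_regular \<kappa> \<T>" "{a,b,c} \<in> \<T>" "a \<noteq> b"
  shows "cr (b-a) (c-a) \<noteq> 0" "\<kappa> > 0"
proof -
  have d: "(diameter (convex hull {a,b,c}))\<^sup>2 \<le> \<kappa> * (\<bar>cr (b-a) (c-a)\<bar> / 2)"
  proof -
    have "(diameter (convex hull {a,b,c}))\<^sup>2 \<le> \<kappa> * measure lebesgue (convex hull {a,b,c})"
      using assms(1,2) unfolding shape_regular_def by blast
    thus ?thesis unfolding area_tri .
  qed
  have "dist a b \<le> diameter (convex hull {a,b,c})"
    by (rule diameter_bounded_bound[OF hull_bounded]) (auto intro: hull_inc)
  moreover have "dist a b > 0" using assms(3) by simp
  ultimately have "diameter (convex hull {a,b,c}) > 0" by linarith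
  hence pos: "(diameter (convex hull {a,b,c}))\<^sup>2 > 0" by simp
  show "cr (b-a) (c-a) \<noteq> 0" using d pos by auto
  show "\<kappa> > 0" using d pos by (smt (verit) abs_ge_zero divide_nonneg_pos mult_nonpos_nonneg)
qed

lemma card_T_eq:
  assumes "conforming_triangulation \<T>" "T \<in> \<T>" "T' \<in> \<T>" "T \<subseteq> T'"
  shows "T = T'"
  using tri_card3[OF assms(1,2)] tri_card3[OF assms(1,3)] assms(4) card_subset_eq by metis

lemma opp_sides:
  assumes ct: "conforming_triangulation \<T>" and sr: "shape_regular \<kappa> \<T>"
    and T: "{x,y,z} \<in> \<T>" and T': "{x,y,z'} \<in> \<T>" and ne: "{x,y,z} \<noteq> {x,y,z'}"
    and xy: "x \<noteq> y"
  shows "cr (y-x) (z-x) * cr (y-x) (z'-x) < 0"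
proof (rule ccontr)
  define D where "D = cr (y-x) (z-x)"
  define D' where "D' = cr (y-x) (z'-x)"
  have D0: "D \<noteq> 0" using tri_nondeg(1)[OF sr T xy] D_def by simp
  have D'0: "D' \<noteq> 0" using tri_nondeg(1)[OF sr T' xy] D'_def by simp
  assume "\<not> cr (y-x) (z-x) * cr (y-x) (z'-x) < 0"
  hence "D * D' > 0" using D0 D'0 unfolding D_def[symmetric] D'_def[symmetric]
    by (metis linorder_neqE_linordered_idom mult_eq_0_iff)
  hence rho: "D / D' > 0" by (simp add: zero_less_mult_iff zero_less_divide_iff)
  define \<beta> where "\<beta> = cr (z-x) (z'-x) / D'"
  define Q where "Q = 1 + \<bar>\<beta>\<bar> + D/D'"
  have Q: "Q > 0" "\<bar>\<beta>\<bar> \<le> Q" "D/D' \<le> Q" "1 \<le> Q" using rho by (auto simp: Q_def)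
  define t where "t = 1 / (4 * Q)"
  have tpos: "t > 0" using Q by (simp add: t_def)
  have aux: "t * r \<le> 1/4" if "r \<le> Q" for r
  proof -
    have "t * r = r / (4 * Q)" by (simp add: t_def)
    also have "\<dots> \<le> Q / (4 * Q)" using that Q(1) by (intro divide_right_mono) auto
    also have "\<dots> = 1/4" using Q(1) by simp
    finally show ?thesis .
  qed
  have tle: "t * \<bar>\<beta>\<bar> \<le> 1/4" "t * (D/D') \<le> 1/4" "t \<le> 1/4"
    using aux[OF Q(2)] aux[OF Q(3)] aux[OF Q(4)] by auto
  define p where "p = ((1-t)/2) *\<^sub>R x + ((1-t)/2) *\<^sub>R y + t *\<^sub>R z"
  have pT: "p \<in> convex hull {x,y,z}" unfolding hull3 p_def
    using tle tpos by (rule_tac x="(1-t)/2" in exI, rule_tac x="(1-t)/2" in exI, rule_tac x=t in exI) auto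
  have px: "p - x = ((1-t)/2) *\<^sub>R (y-x) + t *\<^sub>R (z-x)"
    unfolding p_def vec2_eq by (simp add: algebra_simps)
  have c1: "cr (p-x) (z'-x) = (1-t)/2 * D' + t * cr (z-x) (z'-x)"
    unfolding px cr_lin1 D'_def ..
  have c2: "cr (y-x) (p-x) = t * D"
    unfolding px cr_lin2 D_def cr_self by simp
  define lb where "lb = cr (p-x) (z'-x) / D'"
  define lc where "lc = cr (y-x) (p-x) / D'"
  have lbv: "lb = (1-t)/2 + t * \<beta>" using D'0 unfolding lb_def c1 \<beta>_def by (simp add: field_simps)
  have lcv: "lc = t * (D/D')" unfolding lc_def c2 by simp
  have "D' *\<^sub>R p = (D' - cr (p-x) (z'-x) - cr (y-x) (p-x)) *\<^sub>R x + cr (p-x) (z'-x) *\<^sub>R y + cr (y-x) (p-x) *\<^sub>R z'"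
    using bary0[of y x z' p] unfolding D'_def .
  hence "p = (1 - lb - lc) *\<^sub>R x + lb *\<^sub>R y + lc *\<^sub>R z'"
  proof -
    have "p = ((D' - cr (p-x) (z'-x) - cr (y-x) (p-x))/D') *\<^sub>R x + lb *\<^sub>R y + lc *\<^sub>R z'"
      using scale_div[OF D'0 \<open>D' *\<^sub>R p = _\<close>] unfolding lb_def lc_def .
    moreover have "(D' - cr (p-x) (z'-x) - cr (y-x) (p-x))/D' = 1 - lb - lc"
      using D'0 unfolding lb_def lc_def by (simp add: diff_divide_distrib)
    ultimately show ?thesis by simp
  qed
  moreover have "0 \<le> lb" "0 \<le> lc" "0 \<le> 1 - lb - lc"
  proof -
    have "t * \<beta> \<le> t * \<bar>\<beta>\<bar>" using tpos by (intro mult_left_mono) auto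
    moreover have "t * (- \<bar>\<beta>\<bar>) \<le> t * \<beta>" using tpos by (intro mult_left_mono) auto
    ultimately have b1: "t * \<beta> \<le> t * \<bar>\<beta>\<bar>" "- (t * \<bar>\<beta>\<bar>) \<le> t * \<beta>" by auto
    have r: "0 \<le> t * (D/D')" using tpos rho by (intro mult_nonneg_nonneg) auto
    show "0 \<le> lb" unfolding lbv using ar1[OF b1(2) tle(1) tle(3)] .
    show "0 \<le> lc" unfolding lcv using b1 tle r by (simp add: field_simps)
    show "0 \<le> 1 - lb - lc" unfolding lbv lcv using ar3[OF b1(1) tle(1) tle(2)] tpos by simp
  qed
  ultimately have pT': "p \<in> convex hull {x,y,z'}" unfolding hull3
    by (rule_tac x="1-lb-lc" in exI, rule_tac x=lb in exI, rule_tac x=lc in exI) auto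
  have "convex hull {x,y,z} \<inter> convex hull {x,y,z'} = convex hull ({x,y,z} \<inter> {x,y,z'})"
    using ct T T' unfolding conforming_triangulation_def by blast
  hence "p \<in> convex hull ({x,y,z} \<inter> {x,y,z'})" using pT pT' by blast
  moreover have "z \<notin> {x,y,z'}"
  proof
    assume "z \<in> {x,y,z'}"
    hence "{x,y,z} \<subseteq> {x,y,z'}" by auto
    thus False using card_T_eq[OF ct T T'] ne by simp
  qed
  hence "{x,y,z} \<inter> {x,y,z'} \<subseteq> {x,y}" by auto
  ultimately have "p \<in> convex hull {x,y}" using hull_mono by blast
  then obtain u v where uv: "p = u *\<^sub>R x + v *\<^sub>R y" "u + v = 1" unfolding convex_hull_2 by blast
  have "cr (y-x) (p-x) = 0"
  proof -
    have u: "u = 1 - v" using uv by simp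
    have "p - x = v *\<^sub>R (y - x)" using uv(1) unfolding u vec2_eq by (simp add: algebra_simps)
    thus ?thesis unfolding cr_def by simp
  qed
  thus False using c2 tpos D0 by simp
qed



lemma at_most_two:
  assumes ct: "conforming_triangulation \<T>" and sr: "shape_regular \<kappa> \<T>" and xy: "x \<noteq> y"
  shows "card {T\<in>\<T>. {x,y} \<subseteq> T} \<le> 2"
proof -
  let ?S = "{T\<in>\<T>. {x,y} \<subseteq> T}"
  have fin: "finite ?S" using ct unfolding conforming_triangulation_def by auto
  have key: False if asm: "T1 \<in> ?S" "T2 \<in> ?S" "T3 \<in> ?S" "T1 \<noteq> T2" "T1 \<noteq> T3" "T2 \<noteq> T3" for T1 T2 T3
  proof -
    obtain z1 where z1: "T1 = {x,y,z1}" using tri_split[OF ct, of T1 x y] asm xy by auto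
    obtain z2 where z2: "T2 = {x,y,z2}" using tri_split[OF ct, of T2 x y] asm xy by auto
    obtain z3 where z3: "T3 = {x,y,z3}" using tri_split[OF ct, of T3 x y] asm xy by auto
    have a: "cr (y-x) (z1-x) * cr (y-x) (z2-x) < 0"
      using opp_sides[OF ct sr, of x y z1 z2] z1 z2 asm xy by auto
    have b: "cr (y-x) (z1-x) * cr (y-x) (z3-x) < 0"
      using opp_sides[OF ct sr, of x y z1 z3] z1 z3 asm xy by auto
    have c: "cr (y-x) (z2-x) * cr (y-x) (z3-x) < 0"
      using opp_sides[OF ct sr, of x y z2 z3] z2 z3 asm xy by auto
    have "(cr (y-x) (z1-x) * cr (y-x) (z2-x)) * (cr (y-x) (z1-x) * cr (y-x) (z3-x)) > 0"
      using a b by (simp add: mult_neg_neg)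
    hence "(cr (y-x) (z1-x) * cr (y-x) (z2-x)) * (cr (y-x) (z1-x) * cr (y-x) (z3-x)) * (cr (y-x) (z2-x) * cr (y-x) (z3-x)) < 0"
      using c by (simp add: mult_pos_neg)
    moreover have "(cr (y-x) (z1-x) * cr (y-x) (z2-x)) * (cr (y-x) (z1-x) * cr (y-x) (z3-x)) * (cr (y-x) (z2-x) * cr (y-x) (z3-x))
       = (cr (y-x) (z1-x) * cr (y-x) (z2-x) * cr (y-x) (z3-x))\<^sup>2"
      by (simp add: power2_eq_square algebra_simps)
    ultimately show False by (metis not_less zero_le_power2)
  qed
  show ?thesis
  proof (cases "\<exists>T1\<in>?S. \<exists>T2\<in>?S. T1 \<noteq> T2")
    case True
    then obtain T1 T2 where t: "T1 \<in> ?S" "T2 \<in> ?S" "T1 \<noteq> T2" by blast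
    have "?S \<subseteq> {T1, T2}" using key[OF t(1,2)] t(3) by blast
    hence "card ?S \<le> card {T1,T2}" by (intro card_mono) auto
    also have "\<dots> \<le> 2" by (simp add: card_insert_if)
    finally show ?thesis .
  next
    case False
    hence "card ?S \<le> 1" using card_le_Suc0_iff_eq[OF fin] by auto
    thus ?thesis by simp
  qed
qed

lemma other_tri:
  assumes ct: "conforming_triangulation \<T>" and sr: "shape_regular \<kappa> \<T>"
    and xin: "x \<in> dom_of \<T>" and T: "{x,y,z} \<in> \<T>" and d: "x \<noteq> y" "x \<noteq> z" "y \<noteq> z"
  shows "\<exists>T'\<in>\<T>. T' \<noteq> {x,y,z} \<and> {x,y} \<subseteq> T'"
proof -
  define D where "D = cr (y-x) (z-x)"
  have D0: "D \<noteq> 0" using tri_nondeg(1)[OF sr T d(1)] D_def by simp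
  let ?U = "\<Union>T\<in>\<T>. convex hull T"
  obtain r where r: "r > 0" "ball x r \<subseteq> ?U"
    using xin unfolding dom_of_def mem_interior by blast
  define K where "K = \<Union> ((\<lambda>T'. convex hull T') ` {T'\<in>\<T>. \<not> {x,y} \<subseteq> T'})"
  have finT: "finite \<T>" using ct unfolding conforming_triangulation_def by auto
  have "closed K" unfolding K_def
  proof (rule closed_Union)
    show "finite ((\<lambda>T'. convex hull T') ` {T' \<in> \<T>. \<not> {x, y} \<subseteq> T'})" using finT by simp
    show "\<forall>S\<in>(\<lambda>T'. convex hull T') ` {T' \<in> \<T>. \<not> {x, y} \<subseteq> T'}. closed S"
      using tri_card3(2)[OF ct]
      by (auto intro!: compact_imp_closed finite_imp_compact_convex_hull)
  qed
  have ny: "norm (y-x) > 0" using d by simp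
  have nz: "norm (z-x) > 0" using d by simp
  define s where "s = min (1/2) (r / (2 * norm (y-x)))"
  have s: "s > 0" "s \<le> 1/2" "s * norm (y-x) \<le> r/2"
  proof -
    show "s > 0" using r ny by (simp add: s_def)
    show "s \<le> 1/2" by (simp add: s_def)
    have "s * norm (y-x) \<le> (r / (2 * norm (y-x))) * norm (y-x)"
      using ny by (intro mult_right_mono) (auto simp: s_def)
    thus "s * norm (y-x) \<le> r/2" using ny by simp
  qed
  define q where "q = (1-s) *\<^sub>R x + s *\<^sub>R y + 0 *\<^sub>R z"
  have qx: "q - x = s *\<^sub>R (y - x)" unfolding q_def vec2_eq by (simp add: algebra_simps)
  have qT: "q \<in> convex hull {x,y,z}" unfolding hull3 q_def using s
    by (rule_tac x="1-s" in exI, rule_tac x=s in exI, rule_tac x=0 in exI) auto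
  have qK: "q \<notin> K"
  proof
    assume "q \<in> K"
    then obtain T' where T': "T' \<in> \<T>" "\<not> {x,y} \<subseteq> T'" "q \<in> convex hull T'" unfolding K_def by blast
    have "convex hull {x,y,z} \<inter> convex hull T' = convex hull ({x,y,z} \<inter> T')"
      using ct T T'(1) unfolding conforming_triangulation_def by blast
    hence qI: "q \<in> convex hull ({x,y,z} \<inter> T')" using qT T'(3) by blast
    show False
    proof (cases "x \<in> T'")
      case False
      hence "{x,y,z} \<inter> T' \<subseteq> {y,z}" by auto
      hence "q \<in> convex hull {y,z}" using qI hull_mono by blast
      then obtain u v where uv: "q = u *\<^sub>R y + v *\<^sub>R z" "u + v = 1" unfolding convex_hull_2 by blast
      have "q = 0 *\<^sub>R x + u *\<^sub>R y + v *\<^sub>R z" using uv by simp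
      hence "s = u" "0 = v" using coords_unique[OF D0[unfolded D_def], of "1-s" s 0 0 u v] uv(2)
        unfolding q_def by auto
      thus False using uv(2) s by simp
    next
      case True
      hence "y \<notin> T'" using T'(2) by auto
      hence "{x,y,z} \<inter> T' \<subseteq> {x,z}" by auto
      hence "q \<in> convex hull {x,z}" using qI hull_mono by blast
      then obtain u v where uv: "q = u *\<^sub>R x + v *\<^sub>R z" "u + v = 1" unfolding convex_hull_2 by blast
      have "q = u *\<^sub>R x + 0 *\<^sub>R y + v *\<^sub>R z" using uv by simp
      hence "s = 0" using coords_unique[OF D0[unfolded D_def], of "1-s" s 0 u 0 v] uv(2)
        unfolding q_def by auto
      thus False using s by simp
    qed
  qed
  have "open (- K)" using \<open>closed K\<close> by (simp add: open_Compl)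
  then obtain \<delta> where \<delta>: "\<delta> > 0" "ball q \<delta> \<subseteq> - K" using qK open_contains_ball by blast
  define e where "e = min \<delta> (r/2) / (2 * norm (z-x))"
  have e: "e > 0" using \<delta> r nz by (simp add: e_def)
  have en: "e * norm (z-x) = min \<delta> (r/2) / 2" using nz by (simp add: e_def)
  define p where "p = (1 - s + e) *\<^sub>R x + s *\<^sub>R y + (-e) *\<^sub>R z"
  have pq: "p - q = - (e *\<^sub>R (z - x))" unfolding p_def q_def vec2_eq by (simp add: algebra_simps)
  have dpq: "dist p q = min \<delta> (r/2) / 2" unfolding dist_norm pq using en e by simp
  have "dist x q = s * norm (y-x)" unfolding dist_norm norm_minus_commute[of x q] qx using s(1) by simp
  hence dqx: "dist x q \<le> r/2" using s(3) by simp
  have "dist x p \<le> dist x q + dist q p" by (rule dist_triangle)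
  also have "\<dots> < r" using dqx dpq \<delta>(1) r(1) by (simp add: dist_commute)
  finally have "p \<in> ball x r" by simp
  with r(2) obtain T' where T': "T' \<in> \<T>" "p \<in> convex hull T'" by blast
  have "p \<in> ball q \<delta>" using dpq \<delta>(1) by (simp add: dist_commute)
  hence "p \<notin> K" using \<delta>(2) by blast
  hence xyT': "{x,y} \<subseteq> T'" using T' unfolding K_def by blast
  have "T' \<noteq> {x,y,z}"
  proof
    assume "T' = {x,y,z}"
    hence "p \<in> convex hull {x,y,z}" using T' by simp
    then obtain u v w where uvw: "0 \<le> w" "u + v + w = 1" "p = u *\<^sub>R x + v *\<^sub>R y + w *\<^sub>R z"
      unfolding hull3 by blast
    have "-e = w" using coords_unique(2)[OF D0[unfolded D_def], of "1-s+e" s "-e" u v w] uvw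
      unfolding p_def by auto
    thus False using uvw(1) e by simp
  qed
  thus ?thesis using T' xyT' by blast
qed

lemma edge_interior:
  assumes ct: "conforming_triangulation \<T>" and sr: "shape_regular \<kappa> \<T>"
    and xin: "x \<in> dom_of \<T>" and T: "T \<in> \<T>" "x \<in> T" "y \<in> T" "x \<noteq> y"
  shows "{x,y} \<in> int_edges \<T>"
proof -
  obtain z where z: "T = {x,y,z}" "z \<noteq> x" "z \<noteq> y" using tri_split[OF ct T] by blast
  obtain T' where T': "T' \<in> \<T>" "T' \<noteq> T" "{x,y} \<subseteq> T'"
    using other_tri[OF ct sr xin, of y z] T z by auto
  let ?S = "{T\<in>\<T>. {x,y} \<subseteq> T}"
  have fin: "finite ?S" using ct unfolding conforming_triangulation_def by auto
  have "{T,T'} \<subseteq> ?S" using T T' z by auto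
  hence "card {T,T'} \<le> card ?S" using fin by (rule card_mono[rotated])
  hence "2 \<le> card ?S" using T'(2) by simp
  hence "card ?S = 2" using at_most_two[OF ct sr T(4)] by simp
  moreover have "{x,y} \<in> edges \<T>" unfolding edges_def using T by auto
  ultimately show ?thesis unfolding int_edges_def by simp
qed



lemma compact_tri: "compact (convex hull {a,b,c::pt})"
  by (intro finite_imp_compact_convex_hull) auto

lemma tri_lmeas: "convex hull {a,b,c::pt} \<in> sets lebesgue" "emeasure lebesgue (convex hull {a,b,c::pt}) \<noteq> \<infinity>"
  using lmeasurable_compact[OF compact_tri[of a b c]] by (auto simp: fmeasurable_def)

lemma tri_const_int: "(LINT q:convex hull {a,b,c}|lebesgue. (k::real)) = measure lebesgue (convex hull {a,b,c::pt}) * k"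
  using set_integral_const[where c=k and M=lebesgue and A="convex hull {a,b,c}"] tri_lmeas[of a b c] by simp

lemma set_integrable_cont:
  fixes f :: "pt \<Rightarrow> real"
  assumes "compact S" "continuous_on S f"
  shows "set_integrable lebesgue S f"
proof -
  have i: "integrable lborel (\<lambda>x. indicator S x *\<^sub>R f x)"
    by (rule borel_integrable_compact[OF assms])
  have "integrable lebesgue (\<lambda>x. indicator S x *\<^sub>R f x)"
    using integrable_completion[OF borel_measurable_integrable[OF i]] i by simp
  thus ?thesis unfolding set_integrable_def .
qed

lemma affine_cont:
  assumes "\<forall>q\<in>S. w q = g \<bullet> q + (k::real)"
  shows "continuous_on S w"
proof -
  have "continuous_on S (\<lambda>q. g \<bullet> q + k)" by (intro continuous_intros)
  thus ?thesis using assms continuous_on_cong by (metis (mono_tags, lifting))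
qed

lemma hull_decomp:
  assumes "q \<in> convex hull {x,y,z}"
    and uaff: "\<forall>q\<in>convex hull {x,y,z}. u q = gu \<bullet> q + cu"
    and paff: "\<forall>q\<in>convex hull {x,y,z}. \<psi> q = gp \<bullet> q + cp"
    and psi: "\<psi> x = 1" "\<psi> y = 0" "\<psi> z = 0"
    and umin: "u x \<le> u y" "u x \<le> u z"
  shows "0 \<le> \<psi> q" "\<psi> q \<le> 1" "0 \<le> u q - u x" "u q - u x \<le> (u y - u x) + (u z - u x)"
proof -
  obtain a b c where abc: "0 \<le> a" "0 \<le> b" "0 \<le> c" "a + b + c = 1" "q = a *\<^sub>R x + b *\<^sub>R y + c *\<^sub>R z"
    using assms(1) unfolding hull3 by blast
  have pq: "\<psi> q = a" using affine_eval[OF paff abc(4) abc(1-3)] psi abc(5) by simp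
  have uq: "u q = a * u x + b * u y + c * u z" using affine_eval[OF uaff abc(4) abc(1-3)] abc(5) by simp
  have a: "a = 1 - b - c" using abc(4) by simp
  have uq': "u q - u x = b * (u y - u x) + c * (u z - u x)" unfolding uq a by (simp add: algebra_simps)
  show "0 \<le> \<psi> q" "\<psi> q \<le> 1" using pq abc by auto
  show "0 \<le> u q - u x" unfolding uq' using abc umin by simp
  have "b * (u y - u x) \<le> 1 * (u y - u x)" using abc umin by (intro mult_right_mono) auto
  moreover have "c * (u z - u x) \<le> 1 * (u z - u x)" using abc umin by (intro mult_right_mono) auto
  ultimately show "u q - u x \<le> (u y - u x) + (u z - u x)" unfolding uq' by simp
qed

lemma dot_id1: fixes x y z :: pt shows "(x - z) \<bullet> (y - z) = (z-x) \<bullet> (z-x) - (y-x) \<bullet> (z-x)"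
  unfolding inner2 by (simp add: algebra_simps)
lemma dot_id2: fixes x y z :: pt shows "(x - y) \<bullet> (z - y) = (y-x) \<bullet> (y-x) - (y-x) \<bullet> (z-x)"
  unfolding inner2 by (simp add: algebra_simps)

lemma tri_estimate:
  fixes x y z :: pt and u \<psi> :: "pt \<Rightarrow> real" and b :: "pt \<Rightarrow> pt"
  assumes D0: "cr (y-x) (z-x) \<noteq> 0"
    and uaff: "\<forall>q\<in>convex hull {x,y,z}. u q = gu \<bullet> q + cu"
    and paff: "\<forall>q\<in>convex hull {x,y,z}. \<psi> q = gp \<bullet> q + cp"
    and psi: "\<psi> x = 1" "\<psi> y = 0" "\<psi> z = 0"
    and umin: "u x \<le> u y" "u x \<le> u z"
    and sreg: "(diameter (convex hull {x,y,z}))\<^sup>2 \<le> \<kappa> * measure lebesgue (convex hull {x,y,z})"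
    and bAE: "AE q in lebesgue. q \<in> convex hull {x,y,z} \<longrightarrow> norm (b q) \<le> L"
    and L: "0 \<le> L" and sig: "0 \<le> \<sigma>" and eps: "0 \<le> \<epsilon>" and sgn: "u x < 0 \<or> \<sigma> = 0"
  shows "\<epsilon> * (LINT q:convex hull {x,y,z}|lebesgue. tgrad {x,y,z} u \<bullet> tgrad {x,y,z} \<psi>)
     + (LINT q:convex hull {x,y,z}|lebesgue. (b q \<bullet> tgrad {x,y,z} u) * \<psi> q)
     + \<sigma> * (LINT q:convex hull {x,y,z}|lebesgue. u q * \<psi> q)
   \<le> (-(\<epsilon>/2) * cot (angle_at z x y) + L*\<kappa>*dist x y/4 + \<sigma>*\<kappa>*(dist x y)\<^sup>2/4) * (u y - u x)
   + (-(\<epsilon>/2) * cot (angle_at y x z) + L*\<kappa>*dist x z/4 + \<sigma>*\<kappa>*(dist x z)\<^sup>2/4) * (u z - u x)"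
proof -
  define S where "S = convex hull {x,y,z}"
  define D where "D = cr (y-x) (z-x)"
  define M where "M = measure lebesgue S"
  define dy where "dy = u y - u x"
  define dz where "dz = u z - u x"
  define hy where "hy = dist x y"
  define hz where "hz = dist x z"
  define d where "d = diameter S"
  have dy0: "0 \<le> dy" "0 \<le> dz" using umin by (auto simp: dy_def dz_def)
  have MD: "M = \<bar>D\<bar> / 2" unfolding M_def S_def D_def area_tri ..
  have tu: "tgrad {x,y,z} u = gu" by (rule tgrad_eq[OF D0 uaff])
  have tp: "tgrad {x,y,z} \<psi> = gp" by (rule tgrad_eq[OF D0 paff])
  have xyzS: "x \<in> S" "y \<in> S" "z \<in> S" unfolding S_def by (auto intro: hull_inc)
  have ge: "gu \<bullet> (y-x) = dy" "gu \<bullet> (z-x) = dz" "gp \<bullet> (y-x) = -1" "gp \<bullet> (z-x) = -1"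
    using uaff paff xyzS psi unfolding S_def dy_def dz_def by (auto simp: inner_diff_right)
  have nxy: "x \<noteq> y" "x \<noteq> z" using D0 unfolding cr_def by auto
  have ne: "norm (y-x) = hy" "norm (z-x) = hz" unfolding hy_def hz_def by (simp_all add: dist_norm norm_minus_commute)
  have hpos: "hy > 0" "hz > 0" using nxy unfolding hy_def hz_def by auto
  have bS: "bounded S" unfolding S_def by (rule hull_bounded)
  have hd: "hy \<le> d" "hz \<le> d" unfolding hy_def hz_def d_def
    using diameter_bounded_bound[OF bS] xyzS by auto
  have dpos: "d > 0" using hd hpos by linarith
  have crle: "\<bar>D\<bar> \<le> hy * hz" using cr_le[of "y-x" "z-x"] ne unfolding D_def by simp
  have Dpos: "\<bar>D\<bar> > 0" using D0 D_def by simp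
  have sreg': "d\<^sup>2 \<le> \<kappa> * M" using sreg unfolding d_def M_def S_def .
  have kpos: "\<kappa> > 0"
  proof -
    have "0 < d\<^sup>2" using dpos by simp
    also have "\<dots> \<le> \<kappa> * M" by (rule sreg')
    finally show ?thesis using MD Dpos by (simp add: zero_less_mult_iff)
  qed
  have dby: "d \<le> \<kappa> * hy / 2" and dbz: "d \<le> \<kappa> * hz / 2"
  proof -
    have "d * d \<le> \<kappa> * (hy * hz) / 2" using sreg' MD crle kpos
      by (simp add: power2_eq_square) (smt (verit) mult_left_mono)
    also have "\<dots> \<le> \<kappa> * (hy * d) / 2" using kpos hpos hd by (simp add: mult_left_mono)
    finally have "d * d \<le> (\<kappa> * hy / 2) * d" by simp
    thus "d \<le> \<kappa> * hy / 2" using dpos by simp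
    have "d * d \<le> \<kappa> * (hy * hz) / 2" using sreg' MD crle kpos
      by (simp add: power2_eq_square) (smt (verit) mult_left_mono)
    also have "\<dots> \<le> \<kappa> * (d * hz) / 2" using kpos hpos hd by (simp add: mult_right_mono)
    finally have "d * d \<le> (\<kappa> * hz / 2) * d" by (simp add: mult_ac)
    thus "d \<le> \<kappa> * hz / 2" using dpos by simp
  qed
  have gram': "(gu \<bullet> gp) * D\<^sup>2 = - (dy * ((x - z) \<bullet> (y - z)) + dz * ((x - y) \<bullet> (z - y)))"
  proof -
    have g: "(gu \<bullet> gp) * D\<^sup>2 = dy * (-1) * ((z-x) \<bullet> (z-x)) + dz * (-1) * ((y-x) \<bullet> (y-x))
        - (dy * (-1) + dz * (-1)) * ((y-x) \<bullet> (z-x))"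
      using gram[of gu gp "y-x" "z-x"] unfolding D_def ge .
    show ?thesis unfolding dot_id1[of x y z] dot_id2[of x y z] g by (simp add: algebra_simps inner_commute)
  qed
  have cz: "cot (angle_at z x y) = ((x - z) \<bullet> (y - z)) / \<bar>D\<bar>" using cot_formula[OF D0] D_def by simp
  have cy: "cot (angle_at y x z) = ((x - y) \<bullet> (z - y)) / \<bar>D\<bar>"
  proof -
    have "cr (z-x) (y-x) \<noteq> 0" using D0 cr_swap by (metis neg_equal_0_iff_equal)
    from cot_formula[OF this] show ?thesis using cr_swap[of "z-x" "y-x"] D_def by simp
  qed
  have I1: "(LINT q:S|lebesgue. gu \<bullet> gp) = M * (gu \<bullet> gp)"
    using tri_const_int unfolding S_def M_def by simp
  have T1: "\<epsilon> * (M * (gu \<bullet> gp)) = -(\<epsilon>/2) * cot (angle_at z x y) * dy + -(\<epsilon>/2) * cot (angle_at y x z) * dz"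
  proof -
    have Dne: "D \<noteq> 0" using D0 D_def by simp
    have G0: "gu \<bullet> gp = - (dy * ((x - z) \<bullet> (y - z)) + dz * ((x - y) \<bullet> (z - y))) / D\<^sup>2"
      using gram' Dne by (simp add: field_simps)
    define A where "A = \<bar>D\<bar>"
    have Apos: "A > 0" using Dpos A_def by simp
    have "D\<^sup>2 = A * A" unfolding A_def by (simp add: power2_eq_square)
    hence E: "gu \<bullet> gp = - (dy * ((x - z) \<bullet> (y - z)) + dz * ((x - y) \<bullet> (z - y))) / (A * A)"
      using G0 by simp
    show ?thesis unfolding MD cz cy A_def[symmetric] E using Apos by (simp add: field_simps)
  qed
  have I2: "(LINT q:S|lebesgue. (b q \<bullet> gu) * \<psi> q) \<le> M * (L * norm gu)"
  proof -
    have ic: "set_integrable lebesgue S (\<lambda>q. L * norm gu)"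
      unfolding S_def by (rule set_integrable_cont[OF compact_tri]) simp
    have "(LINT q:S|lebesgue. (b q \<bullet> gu) * \<psi> q) \<le> (LINT q:S|lebesgue. L * norm gu)"
      unfolding set_lebesgue_integral_def
    proof (rule integral_mono_AE')
      show "integrable lebesgue (\<lambda>q. indicator S q *\<^sub>R (L * norm gu))"
        using ic unfolding set_integrable_def .
      show "AE q in lebesgue. indicator S q *\<^sub>R ((b q \<bullet> gu) * \<psi> q) \<le> indicator S q *\<^sub>R (L * norm gu)"
        using bAE unfolding S_def[symmetric]
      proof (rule eventually_mono)
        fix q assume h: "q \<in> S \<longrightarrow> norm (b q) \<le> L"
        show "indicator S q *\<^sub>R ((b q \<bullet> gu) * \<psi> q) \<le> indicator S q *\<^sub>R (L * norm gu)"
        proof (cases "q \<in> S")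
          case True
          have p01: "0 \<le> \<psi> q" "\<psi> q \<le> 1" using hull_decomp[OF _ uaff paff psi umin, of q] True S_def by auto
          have "(b q \<bullet> gu) * \<psi> q \<le> \<bar>b q \<bullet> gu\<bar> * \<psi> q" using p01 by (intro mult_right_mono) auto
          also have "\<dots> \<le> \<bar>b q \<bullet> gu\<bar> * 1" using p01 by (intro mult_left_mono) auto
          also have "\<dots> \<le> norm (b q) * norm gu" using Cauchy_Schwarz_ineq2 by simp
          also have "\<dots> \<le> L * norm gu" using h True by (intro mult_right_mono) auto
          finally show ?thesis using True by simp
        qed simp
      qed
      show "AE q in lebesgue. 0 \<le> indicator S q *\<^sub>R (L * norm gu)" using L by (simp add: indicator_def)
    qed
    also have "\<dots> = M * (L * norm gu)" using tri_const_int unfolding S_def M_def by simp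
    finally show ?thesis .
  qed
  have T2: "M * (L * norm gu) \<le> L*\<kappa>*hy/4 * dy + L*\<kappa>*hz/4 * dz"
  proof -
    have "norm gu * \<bar>D\<bar> \<le> \<bar>dy\<bar> * hz + \<bar>dz\<bar> * hy"
      using gnorm_bound[of gu "y-x" "z-x"] ge ne unfolding D_def by simp
    also have "\<dots> \<le> dy * d + dz * d" using dy0 hd by (simp add: mult_left_mono add_mono)
    also have "\<dots> \<le> dy * (\<kappa> * hy / 2) + dz * (\<kappa> * hz / 2)"
      using mult_left_mono[OF dby dy0(1)] mult_left_mono[OF dbz dy0(2)] by (rule add_mono)
    finally have "M * norm gu \<le> (dy * (\<kappa> * hy / 2) + dz * (\<kappa> * hz / 2)) / 2" unfolding MD by (simp add: field_simps)
    hence "L * (M * norm gu) \<le> L * ((dy * (\<kappa> * hy / 2) + dz * (\<kappa> * hz / 2)) / 2)" using L by (rule mult_left_mono)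
    thus ?thesis by (simp add: field_simps)
  qed
  have I3: "\<sigma> * (LINT q:S|lebesgue. u q * \<psi> q) \<le> \<sigma> * (M * (dy + dz))"
  proof -
    have cu: "continuous_on S u" using affine_cont uaff S_def by blast
    have cp: "continuous_on S \<psi>" using affine_cont paff S_def by blast
    have cS: "compact S" unfolding S_def by (rule compact_tri)
    have i1: "set_integrable lebesgue S (\<lambda>q. u q * \<psi> q)"
      by (rule set_integrable_cont[OF cS]) (intro continuous_intros cu cp)
    have i2: "set_integrable lebesgue S (\<lambda>q. (dy + dz) + u x * \<psi> q)"
      by (rule set_integrable_cont[OF cS]) (intro continuous_intros cp)
    have i3: "set_integrable lebesgue S \<psi>" by (rule set_integrable_cont[OF cS cp])
    have i4: "set_integrable lebesgue S (\<lambda>q. dy + dz)" by (rule set_integrable_cont[OF cS]) simp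
    have i5: "set_integrable lebesgue S (\<lambda>q. 0::real)" by (rule set_integrable_cont[OF cS]) simp
    have i6: "set_integrable lebesgue S (\<lambda>q. u x * \<psi> q)" using i3 by simp
    have "(LINT q:S|lebesgue. u q * \<psi> q) \<le> (LINT q:S|lebesgue. (dy + dz) + u x * \<psi> q)"
    proof (rule set_integral_mono[OF i1 i2])
      fix q assume q: "q \<in> S"
      note hd' = hull_decomp[OF q[unfolded S_def] uaff paff psi umin]
      have "u q * \<psi> q = (u q - u x) * \<psi> q + u x * \<psi> q" by (simp add: algebra_simps)
      also have "(u q - u x) * \<psi> q \<le> (dy + dz) * 1"
        using hd' unfolding dy_def dz_def by (intro mult_mono) auto
      finally show "u q * \<psi> q \<le> (dy + dz) + u x * \<psi> q" by simp
    qed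
    also have "\<dots> = M * (dy + dz) + u x * (LINT q:S|lebesgue. \<psi> q)"
      using set_integral_add(2)[OF i4 i6] tri_const_int unfolding S_def M_def by simp
    finally have A: "(LINT q:S|lebesgue. u q * \<psi> q) \<le> M * (dy + dz) + u x * (LINT q:S|lebesgue. \<psi> q)" .
    have "(LINT q:S|lebesgue. (0::real)) \<le> (LINT q:S|lebesgue. \<psi> q)"
      by (rule set_integral_mono[OF i5 i3]) (use hull_decomp[OF _ uaff paff psi umin] S_def in auto)
    hence P: "0 \<le> (LINT q:S|lebesgue. \<psi> q)" by (simp add: set_lebesgue_integral_def)
    have "\<sigma> * (LINT q:S|lebesgue. u q * \<psi> q) \<le> \<sigma> * (M * (dy + dz) + u x * (LINT q:S|lebesgue. \<psi> q))"
      using A sig by (rule mult_left_mono)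
    also have "\<dots> \<le> \<sigma> * (M * (dy + dz))"
    proof -
      have "\<sigma> * (u x * (LINT q:S|lebesgue. \<psi> q)) \<le> 0"
        using sgn P sig by (auto simp: mult_nonpos_nonneg mult_le_0_iff)
      thus ?thesis by (simp add: algebra_simps)
    qed
    finally show ?thesis .
  qed
  have T3: "\<sigma> * (M * (dy + dz)) \<le> \<sigma>*\<kappa>*hy\<^sup>2/4 * dy + \<sigma>*\<kappa>*hz\<^sup>2/4 * dz"
  proof -
    have My: "M \<le> \<kappa> * hy\<^sup>2 / 4"
    proof -
      have "M \<le> hy * hz / 2" using MD crle by simp
      also have "\<dots> \<le> hy * d / 2" using hd hpos by (simp add: mult_left_mono)
      also have "\<dots> \<le> hy * (\<kappa> * hy / 2) / 2" using dby hpos by (simp add: mult_left_mono)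
      finally show ?thesis by (simp add: power2_eq_square field_simps)
    qed
    have Mz: "M \<le> \<kappa> * hz\<^sup>2 / 4"
    proof -
      have "M \<le> hy * hz / 2" using MD crle by simp
      also have "\<dots> \<le> d * hz / 2" using hd hpos by (simp add: mult_right_mono)
      also have "\<dots> \<le> (\<kappa> * hz / 2) * hz / 2" using dbz hpos by (simp add: mult_right_mono)
      finally show ?thesis by (simp add: power2_eq_square field_simps)
    qed
    have "M * dy \<le> \<kappa> * hy\<^sup>2 / 4 * dy" using My dy0(1) by (rule mult_right_mono)
    moreover have "M * dz \<le> \<kappa> * hz\<^sup>2 / 4 * dz" using Mz dy0(2) by (rule mult_right_mono)
    ultimately have "M * (dy + dz) \<le> \<kappa> * hy\<^sup>2 / 4 * dy + \<kappa> * hz\<^sup>2 / 4 * dz" by (simp add: algebra_simps)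
    hence "\<sigma> * (M * (dy + dz)) \<le> \<sigma> * (\<kappa> * hy\<^sup>2 / 4 * dy + \<kappa> * hz\<^sup>2 / 4 * dz)" using sig by (rule mult_left_mono)
    thus ?thesis by (simp add: algebra_simps)
  qed
  have "\<epsilon> * (LINT q:S|lebesgue. tgrad {x,y,z} u \<bullet> tgrad {x,y,z} \<psi>)
     + (LINT q:S|lebesgue. (b q \<bullet> tgrad {x,y,z} u) * \<psi> q)
     + \<sigma> * (LINT q:S|lebesgue. u q * \<psi> q)
     \<le> (-(\<epsilon>/2) * cot (angle_at z x y) * dy + -(\<epsilon>/2) * cot (angle_at y x z) * dz)
       + (L*\<kappa>*hy/4 * dy + L*\<kappa>*hz/4 * dz) + (\<sigma>*\<kappa>*hy\<^sup>2/4 * dy + \<sigma>*\<kappa>*hz\<^sup>2/4 * dz)"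
    unfolding tu tp I1 T1[symmetric] using I2 T2 I3 T3 by linarith
  thus ?thesis unfolding S_def dy_def dz_def hy_def hz_def by (simp add: algebra_simps)
qed



lemma hE_eq: "hE {a,b} = dist a b"
proof -
  have "\<exists>h. \<exists>a' b'. {a,b} = {a',b'} \<and> h = dist a' b'" by blast
  hence "\<exists>a' b'. {a,b} = {a',b'} \<and> hE {a,b} = dist a' b'" unfolding hE_def by (rule someI_ex)
  then obtain a' b' where "{a,b} = {a',b'}" "hE {a,b} = dist a' b'" by blast
  thus ?thesis by (auto simp: doubleton_eq_iff dist_commute)
qed

lemma abs_tder_eq: "abs_tder {a,b} u = \<bar>u b - u a\<bar> / dist a b"
proof -
  have "\<exists>h. \<exists>a' b'. {a,b} = {a',b'} \<and> h = \<bar>u b' - u a'\<bar> / dist a' b'" by blast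
  hence "\<exists>a' b'. {a,b} = {a',b'} \<and> abs_tder {a,b} u = \<bar>u b' - u a'\<bar> / dist a' b'" unfolding abs_tder_def by (rule someI_ex)
  then obtain a' b' where "{a,b} = {a',b'}" "abs_tder {a,b} u = \<bar>u b' - u a'\<bar> / dist a' b'" by blast
  thus ?thesis by (auto simp: doubleton_eq_iff dist_commute abs_minus_commute)
qed

lemma edge_int_tt_eq: "edge_int_tt {a,b} u v = dist a b * (((u b - u a) / dist a b) * ((v b - v a) / dist a b))"
proof -
  have "\<exists>h. \<exists>a' b'. {a,b} = {a',b'} \<and> h = dist a' b' * (((u b' - u a') / dist a' b') * ((v b' - v a') / dist a' b'))" by blast
  hence "\<exists>a' b'. {a,b} = {a',b'} \<and> edge_int_tt {a,b} u v = dist a' b' * (((u b' - u a') / dist a' b') * ((v b' - v a') / dist a' b'))"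
    unfolding edge_int_tt_def by (rule someI_ex)
  then obtain a' b' where "{a,b} = {a',b'}" "edge_int_tt {a,b} u v = dist a' b' * (((u b' - u a') / dist a' b') * ((v b' - v a') / dist a' b'))" by blast
  thus ?thesis by (auto simp: doubleton_eq_iff dist_commute algebra_simps)
qed

lemma xi_node_bounds: "0 \<le> xi_node \<T> w x" "xi_node \<T> w x \<le> 1"
proof -
  let ?D = "\<Sum>y\<in>nbrs \<T> x. \<bar>w x - w y\<bar>"
  have "0 \<le> ?D" by (simp add: sum_nonneg)
  moreover have "\<bar>\<Sum>y\<in>nbrs \<T> x. (w x - w y)\<bar> \<le> ?D" by (rule sum_abs)
  ultimately show "0 \<le> xi_node \<T> w x" "xi_node \<T> w x \<le> 1" unfolding xi_node_def Let_def
    by (auto simp: divide_le_eq_1)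
qed

lemma xi_node_one:
  assumes "finite (nbrs \<T> x)" "\<forall>y\<in>nbrs \<T> x. w x \<le> w y" "v \<in> nbrs \<T> x" "w x < w v"
  shows "xi_node \<T> w x = 1"
proof -
  let ?D = "\<Sum>y\<in>nbrs \<T> x. \<bar>w x - w y\<bar>"
  have "0 < \<bar>w x - w v\<bar>" using assms(4) by simp
  also have "\<bar>w x - w v\<bar> \<le> ?D" using member_le_sum[of v "nbrs \<T> x" "\<lambda>y. \<bar>w x - w y\<bar>"] assms(1,3) by auto
  finally have Dp: "?D > 0" .
  have "(\<Sum>y\<in>nbrs \<T> x. (w x - w y)) = (\<Sum>y\<in>nbrs \<T> x. - \<bar>w x - w y\<bar>)"
    using assms(2) by (intro sum.cong) auto
  also have "\<dots> = - ?D" by (rule sum_negf)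
  finally have "(\<Sum>y\<in>nbrs \<T> x. (w x - w y)) = - ?D" .
  hence "\<bar>\<Sum>y\<in>nbrs \<T> x. (w x - w y)\<bar> = ?D" using Dp by simp
  thus ?thesis using Dp unfolding xi_node_def Let_def by simp
qed

lemma alpha_ge1:
  assumes "xi_node \<T> w x = 1" "p \<ge> 1"
  shows "alpha_E \<T> p w {x,v} \<ge> 1"
proof -
  define f where "f a b t = ((1 - t) * xi_node \<T> w a + t * xi_node \<T> w b) powr p" for a b and t :: real
  have bd: "bdd_above (f a b ` {0..1})" for a b
  proof (rule bdd_aboveI2)
    fix t :: real assume t: "t \<in> {0..1}"
    have b0: "0 \<le> (1 - t) * xi_node \<T> w a + t * xi_node \<T> w b"
      using t xi_node_bounds[of \<T> w a] xi_node_bounds[of \<T> w b] by auto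
    have "(1 - t) * xi_node \<T> w a + t * xi_node \<T> w b \<le> (1 - t) * 1 + t * 1"
      using t xi_node_bounds[of \<T> w a] xi_node_bounds[of \<T> w b] by (intro add_mono mult_left_mono) auto
    hence b1: "(1 - t) * xi_node \<T> w a + t * xi_node \<T> w b \<le> 1" by simp
    show "f a b t \<le> 1" unfolding f_def using powr_mono2[OF _ b0 b1, of p] assms(2) by simp
  qed
  have P: "\<forall>r. (\<exists>a b. {x,v} = {a,b} \<and> r = (SUP t\<in>{0..1}. f a b t)) \<longrightarrow> r \<ge> 1"
  proof (intro allI impI)
    fix r assume "\<exists>a b. {x,v} = {a,b} \<and> r = (SUP t\<in>{0..1}. f a b t)"
    then obtain a b where ab: "{x,v} = {a,b}" "r = (SUP t\<in>{0..1}. f a b t)" by blast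
    show "r \<ge> 1"
    proof (cases "a = x")
      case True
      have "f a b 0 \<le> r" unfolding ab(2) by (rule cSUP_upper[OF _ bd]) simp
      moreover have "f a b 0 = 1" unfolding f_def using True assms(1) by simp
      ultimately show ?thesis by simp
    next
      case False
      hence "b = x" using ab(1) by (auto simp: doubleton_eq_iff)
      have "f a b 1 \<le> r" unfolding ab(2) by (rule cSUP_upper[OF _ bd]) simp
      moreover have "f a b 1 = 1" unfolding f_def using \<open>b = x\<close> assms(1) by simp
      ultimately show ?thesis by simp
    qed
  qed
  have "\<exists>r a b. {x,v} = {a,b} \<and> r = (SUP t\<in>{0..1}. f a b t)" by blast
  hence "\<exists>a b. {x,v} = {a,b} \<and> alpha_E \<T> p w {x,v} = (SUP t\<in>{0..1}. f a b t)"
    unfolding alpha_E_def f_def by (rule someI_ex)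
  thus ?thesis using P by blast
qed

lemma Linf_AE:
  assumes "Linf_field \<Omega> b" "open \<Omega>" "x0 \<in> \<Omega>"
  shows "0 \<le> Linf_norm \<Omega> b" "AE q in lebesgue. q \<in> \<Omega> \<longrightarrow> norm (b q) \<le> Linf_norm \<Omega> b"
proof -
  define E where "E = esssup (restrict_space lebesgue \<Omega>) (\<lambda>x. ereal (norm (b x)))"
  define L where "L = Linf_norm \<Omega> b"
  have EL: "L = real_of_ereal E" unfolding L_def E_def Linf_norm_def ..
  have Einf: "E < \<infinity>" using assms(1) unfolding Linf_field_def E_def by simp
  have "AE q in restrict_space lebesgue \<Omega>. ereal (norm (b q)) \<le> E" unfolding E_def by (rule esssup_AE)
  hence A: "AE q in restrict_space lebesgue \<Omega>. 0 \<le> L \<and> norm (b q) \<le> L"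
  proof (rule eventually_mono)
    fix q assume h: "ereal (norm (b q)) \<le> E"
    show "0 \<le> L \<and> norm (b q) \<le> L"
    proof (cases E)
      case (real r) thus ?thesis using h EL by (auto intro: order_trans[OF norm_ge_zero])
    next
      case PInf thus ?thesis using Einf by simp
    next
      case MInf thus ?thesis using h by simp
    qed
  qed
  have meas: "\<Omega> \<inter> space lebesgue \<in> sets lebesgue" using borel_open[OF assms(2)] by simp
  have A': "AE q in lebesgue. q \<in> \<Omega> \<longrightarrow> 0 \<le> L \<and> norm (b q) \<le> L"
    using A unfolding AE_restrict_space_iff[OF meas] .
  show "AE q in lebesgue. q \<in> \<Omega> \<longrightarrow> norm (b q) \<le> Linf_norm \<Omega> b"
    using A' unfolding L_def by (rule eventually_mono) auto
  show "0 \<le> Linf_norm \<Omega> b"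
  proof (rule ccontr)
    assume "\<not> 0 \<le> Linf_norm \<Omega> b"
    hence "AE q in lebesgue. q \<notin> \<Omega>" using A' unfolding L_def by (rule_tac eventually_mono) auto
    hence e0: "emeasure lebesgue \<Omega> = 0"
      using AE_iff_measurable[of "\<Omega>" lebesgue "\<lambda>q. q \<notin> \<Omega>"] borel_open[OF assms(2)] by auto
    obtain r where r: "r > 0" "ball x0 r \<subseteq> \<Omega>" using assms(2,3) open_contains_ball by blast
    have "emeasure lebesgue (ball x0 r) \<le> emeasure lebesgue \<Omega>"
      using r(2) borel_open[OF assms(2)] by (intro emeasure_mono) auto
    hence "emeasure lebesgue (ball x0 r) = 0" using e0 by simp
    hence "measure lebesgue (ball x0 r) = 0" by (simp add: measure_def)
    moreover have "measure lebesgue (ball x0 r) = measure lborel (ball x0 r)" by simp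
    moreover have "measure lborel (ball x0 r) > 0" using content_ball_pos[OF r(1)] by simp
    ultimately show False by simp
  qed
qed

lemma tri_AE:
  assumes "AE q in lebesgue. q \<in> dom_of \<T> \<longrightarrow> norm (b q) \<le> L" "T \<in> \<T>" "finite T"
  shows "AE q in lebesgue. q \<in> convex hull T \<longrightarrow> norm (b q) \<le> L"
proof -
  have "negligible (frontier (convex hull T))" by (rule negligible_convex_frontier) simp
  hence "frontier (convex hull T) \<in> null_sets lebesgue" using negligible_iff_null_sets by blast
  hence N: "AE q in lebesgue. q \<notin> frontier (convex hull T)" by (rule AE_not_in)
  have sub: "interior (convex hull T) \<subseteq> dom_of \<T>"
    unfolding dom_of_def using assms(2) by (intro interior_mono) blast
  have cl: "closed (convex hull T)" using assms(3) by (simp add: compact_imp_closed finite_imp_compact_convex_hull)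
  show ?thesis using assms(1) N
  proof (eventually_elim)
    case (elim q)
    show ?case
    proof
      assume "q \<in> convex hull T"
      hence "q \<in> interior (convex hull T)" using elim(2) cl unfolding frontier_def by (simp add: closure_closed)
      thus "norm (b q) \<le> L" using elim(1) sub by blast
    qed
  qed
qed

lemma set_int_neg: "(LINT q:S|M. - (f q::real)) = - (LINT q:S|M. f q)"
  unfolding set_lebesgue_integral_def by simp

lemma set_int_zero: "(\<forall>q\<in>S. f q = (0::real)) \<Longrightarrow> (LINT q:S|M. f q) = 0"
proof -
  assume h: "\<forall>q\<in>S. f q = 0"
  have "(\<lambda>q. indicator S q *\<^sub>R f q) = (\<lambda>q. 0)" using h by (auto simp: indicator_def)
  thus ?thesis unfolding set_lebesgue_integral_def by simp
qed



lemma vh_aff: "u \<in> Vh \<T> \<Longrightarrow> T \<in> \<T> \<Longrightarrow> \<exists>g c. \<forall>x\<in>convex hull T. u x = g \<bullet> x + c"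
  unfolding Vh_def by blast

lemma nodesI: "T \<in> \<T> \<Longrightarrow> a \<in> T \<Longrightarrow> a \<in> nodes \<T>"
  unfolding nodes_def by blast

lemma min_case:
  assumes ct: "conforming_triangulation \<T>" and sr: "shape_regular \<kappa> \<T>" and xz: "xu_zikatanov \<T>"
   and eps: "\<epsilon> > 0" and sig: "\<sigma> \<ge> 0" and g0: "\<gamma>0 > 0" and p1: "p \<ge> 1"
   and lf: "Linf_field (dom_of \<T>) b"
   and gam: "\<forall>E\<in>int_edges \<T>. \<gamma>0 > (\<bar>\<kappa>\<bar>/2+1) * \<sigma> * hE E + (\<bar>\<kappa>\<bar>/2+1) * Linf_norm (dom_of \<T>) b"
   and u: "u \<in> Vh \<T>" and \<psi>: "\<psi> \<in> Vh \<T>" and xi: "interior_node \<T> xi"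
   and psi: "\<forall>y\<in>nodes \<T>. \<psi> y = (if y = xi then 1 else 0)"
   and umin: "\<forall>x\<in>patch \<T> xi. u xi \<le> u x" and sgn: "u xi < 0 \<or> \<sigma> = 0"
  shows "\<exists>c. (\<forall>E\<in>edges_at \<T> xi. c E < 0) \<and>
           a_tilde \<T> \<epsilon> b \<sigma> \<gamma>0 p u \<psi> \<le> (\<Sum>E\<in>edges_at \<T> xi. c E * abs_tder E u)"
proof -
  define L where "L = Linf_norm (dom_of \<T>) b"
  have xiO: "xi \<in> dom_of \<T>" and xiN: "xi \<in> nodes \<T>" using xi unfolding interior_node_def by auto
  have oO: "open (dom_of \<T>)" unfolding dom_of_def by simp
  have L0: "0 \<le> L" using Linf_AE(1)[OF lf oO xiO] L_def by simp
  have LAE: "AE q in lebesgue. q \<in> dom_of \<T> \<longrightarrow> norm (b q) \<le> L" using Linf_AE(2)[OF lf oO xiO] L_def by simp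
  have finT: "finite \<T>" using ct unfolding conforming_triangulation_def by auto
  have finTT: "\<And>T. T \<in> \<T> \<Longrightarrow> finite T" using tri_card3(2)[OF ct] .
  have finN: "finite (nodes \<T>)" unfolding nodes_def using finT finTT by auto
  obtain T0 where T0: "T0 \<in> \<T>" "xi \<in> T0" using xiN unfolding nodes_def by blast
  obtain y0 z0 where yz0: "T0 = {xi,y0,z0}" "y0 \<noteq> xi" using tri_split1[OF ct T0] by blast
  have T0': "{xi,y0,z0} \<in> \<T>" using T0(1) unfolding yz0(1) .
  have kpos: "\<kappa> > 0" by (rule tri_nondeg(2)[OF sr T0' yz0(2)[symmetric]])
  hence kabs: "\<bar>\<kappa>\<bar> = \<kappa>" by simp
  define A where "A = {T\<in>\<T>. xi \<in> T}"
  define N where "N = nbrs \<T> xi"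
  define du where "du v = u v - u xi" for v
  define h where "h v = dist xi v" for v
  have finA: "finite A" using finT unfolding A_def by simp
  have patchI: "\<And>T v. T \<in> \<T> \<Longrightarrow> xi \<in> T \<Longrightarrow> v \<in> convex hull T \<Longrightarrow> v \<in> patch \<T> xi"
    unfolding patch_def by blast
  have uminT: "\<And>T v. T \<in> \<T> \<Longrightarrow> xi \<in> T \<Longrightarrow> v \<in> T \<Longrightarrow> u xi \<le> u v"
    using umin patchI hull_inc by metis
  have Nprop: "v \<noteq> xi \<and> {xi,v} \<in> int_edges \<T> \<and> (\<exists>T\<in>\<T>. {xi,v} \<subseteq> T) \<and> u xi \<le> u v \<and> v \<in> nodes \<T>"
    if "v \<in> N" for v
  proof -
    have e: "v \<noteq> xi" "{xi,v} \<in> int_edges \<T>" using that unfolding N_def nbrs_def by auto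
    then obtain T where T: "T \<in> \<T>" "{xi,v} \<subseteq> T" unfolding int_edges_def edges_def by auto
    have "v \<in> T" "xi \<in> T" using T(2) by auto
    thus ?thesis using e uminT[of T v] T(1) nodesI[OF T(1)] by auto
  qed
  have finNb: "finite N" using finN Nprop by (blast intro: finite_subset)
  have Nge: "\<forall>y\<in>N. u xi \<le> u y" using Nprop by blast
  define opp where "opp T v = (THE w. w \<in> T \<and> w \<noteq> xi \<and> w \<noteq> v)" for T v
  have opp_eq: "opp {xi,v,w} v = w" if "w \<noteq> xi" "w \<noteq> v" for v w
    unfolding opp_def using that by (rule_tac the_equality) auto
  define G where "G T v = (-(\<epsilon>/2) * cot (angle_at (opp T v) xi v) + L*\<kappa>*h v/4 + \<sigma>*\<kappa>*(h v)\<^sup>2/4) * du v" for T v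
  define sT where "sT T = \<epsilon> * (LINT x:convex hull T|lebesgue. tgrad T u \<bullet> tgrad T \<psi>)
      + (LINT x:convex hull T|lebesgue. (b x \<bullet> tgrad T u) * \<psi> x)
      + \<sigma> * (LINT x:convex hull T|lebesgue. u x * \<psi> x)" for T
  have aform: "a_form \<T> \<epsilon> b \<sigma> u \<psi> = (\<Sum>T\<in>\<T>. sT T)" unfolding a_form_def sT_def ..
  have zeroT: "sT T = 0" if T: "T \<in> \<T>" "xi \<notin> T" for T
  proof -
    obtain a1 a2 a3 where abc: "T = {a1,a2,a3}" "a1 \<noteq> a2" "a2 \<noteq> a3" "a1 \<noteq> a3"
      using tri_card3(1)[OF ct T(1)] card_3_iff by metis
    have inT: "a1 \<in> T" "a2 \<in> T" "a3 \<in> T" using abc(1) by auto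
    have nd: "a1 \<in> nodes \<T>" "a2 \<in> nodes \<T>" "a3 \<in> nodes \<T>" using nodesI[OF T(1)] inT by auto
    have xa: "a1 \<noteq> xi" "a2 \<noteq> xi" "a3 \<noteq> xi" using inT T(2) by auto
    have pz: "\<psi> a1 = 0" "\<psi> a2 = 0" "\<psi> a3 = 0" using psi nd xa by auto
    obtain g k where gk: "\<forall>q\<in>convex hull {a1,a2,a3}. \<psi> q = g \<bullet> q + k" using vh_aff[OF \<psi> T(1)] unfolding abc(1) by blast
    have p0: "\<forall>q\<in>convex hull {a1,a2,a3}. \<psi> q = 0"
    proof
      fix q assume "q \<in> convex hull {a1,a2,a3}"
      then obtain x1 x2 x3 where "0 \<le> x1" "0 \<le> x2" "0 \<le> x3" "x1+x2+x3 = 1" "q = x1 *\<^sub>R a1 + x2 *\<^sub>R a2 + x3 *\<^sub>R a3"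
        unfolding hull3 by blast
      thus "\<psi> q = 0" using affine_eval[OF gk, of x1 x2 x3] pz by simp
    qed
    have D: "cr (a2-a1) (a3-a1) \<noteq> 0" using tri_nondeg(1)[OF sr, of a1 a2 a3] T(1) abc(1,2) by auto
    have "\<forall>q\<in>convex hull {a1,a2,a3}. \<psi> q = 0 \<bullet> q + 0" using p0 by simp
    hence tg: "tgrad T \<psi> = 0" unfolding abc(1) by (rule tgrad_eq[OF D])
    have p0': "\<forall>q\<in>convex hull T. \<psi> q = 0" using p0 unfolding abc(1) .
    have i1: "(LINT q:convex hull T|lebesgue. tgrad T u \<bullet> tgrad T \<psi>) = 0" by (rule set_int_zero) (simp add: tg)
    have i2: "(LINT q:convex hull T|lebesgue. (b q \<bullet> tgrad T u) * \<psi> q) = 0" by (rule set_int_zero) (simp add: p0')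
    have i3: "(LINT q:convex hull T|lebesgue. u q * \<psi> q) = 0" by (rule set_int_zero) (simp add: p0')
    show ?thesis unfolding sT_def i1 i2 i3 by simp
  qed
  have A1: "(\<Sum>T\<in>\<T>. sT T) = (\<Sum>T\<in>A. sT T)"
    by (rule sum.mono_neutral_right[OF finT]) (auto simp: A_def zeroT)
  have A2: "sT T \<le> (\<Sum>v\<in>T-{xi}. G T v)" if T: "T \<in> A" for T
  proof -
    have T': "T \<in> \<T>" "xi \<in> T" using T A_def by auto
    obtain y z where yz: "T = {xi,y,z}" "y \<noteq> xi" "z \<noteq> xi" "y \<noteq> z" using tri_split1[OF ct T'] by blast
    have D: "cr (y-xi) (z-xi) \<noteq> 0" using tri_nondeg(1)[OF sr, of xi y z] T'(1) yz(1,2) by auto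
    obtain gu cu where ua: "\<forall>q\<in>convex hull {xi,y,z}. u q = gu \<bullet> q + cu" using vh_aff[OF u T'(1)] unfolding yz(1) by blast
    obtain gp cp where pa: "\<forall>q\<in>convex hull {xi,y,z}. \<psi> q = gp \<bullet> q + cp" using vh_aff[OF \<psi> T'(1)] unfolding yz(1) by blast
    have inT: "y \<in> T" "z \<in> T" using yz(1) by auto
    have nd: "y \<in> nodes \<T>" "z \<in> nodes \<T>" using nodesI[OF T'(1)] inT by auto
    have pv: "\<psi> xi = 1" "\<psi> y = 0" "\<psi> z = 0" using psi nd xiN yz(2,3) by auto
    have um: "u xi \<le> u y" "u xi \<le> u z" using uminT[OF T'] inT by auto
    have sreg0: "(diameter (convex hull T))\<^sup>2 \<le> \<kappa> * measure lebesgue (convex hull T)"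
      using sr T'(1) unfolding shape_regular_def by blast
    have sreg: "(diameter (convex hull {xi,y,z}))\<^sup>2 \<le> \<kappa> * measure lebesgue (convex hull {xi,y,z})"
      using sreg0 unfolding yz(1) .
    have bA0: "AE q in lebesgue. q \<in> convex hull T \<longrightarrow> norm (b q) \<le> L"
      by (rule tri_AE[OF LAE T'(1) finTT[OF T'(1)]])
    have bA: "AE q in lebesgue. q \<in> convex hull {xi,y,z} \<longrightarrow> norm (b q) \<le> L"
      using bA0 unfolding yz(1) .
    have est0: "sT {xi,y,z} \<le> (-(\<epsilon>/2) * cot (angle_at z xi y) + L*\<kappa>*dist xi y/4 + \<sigma>*\<kappa>*(dist xi y)\<^sup>2/4) * (u y - u xi)
       + (-(\<epsilon>/2) * cot (angle_at y xi z) + L*\<kappa>*dist xi z/4 + \<sigma>*\<kappa>*(dist xi z)\<^sup>2/4) * (u z - u xi)"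
      unfolding sT_def by (rule tri_estimate[OF D ua pa pv um sreg bA L0 sig less_imp_le[OF eps] sgn])
    have est: "sT T \<le> (-(\<epsilon>/2) * cot (angle_at z xi y) + L*\<kappa>*dist xi y/4 + \<sigma>*\<kappa>*(dist xi y)\<^sup>2/4) * (u y - u xi)
       + (-(\<epsilon>/2) * cot (angle_at y xi z) + L*\<kappa>*dist xi z/4 + \<sigma>*\<kappa>*(dist xi z)\<^sup>2/4) * (u z - u xi)"
      using est0 unfolding yz(1) .
    have o1: "opp T y = z" unfolding yz(1) by (rule opp_eq) (use yz in auto)
    have Tc: "{xi,y,z} = {xi,z,y}" by auto
    have o2: "opp T z = y" unfolding yz(1) Tc by (rule opp_eq) (use yz in auto)
    have Tm: "T - {xi} = {y,z}" unfolding yz(1) using yz(2-4) by auto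
    have "(\<Sum>v\<in>T-{xi}. G T v) = G T y + G T z" unfolding Tm using yz(4) by simp
    also have "\<dots> = (-(\<epsilon>/2) * cot (angle_at z xi y) + L*\<kappa>*dist xi y/4 + \<sigma>*\<kappa>*(dist xi y)\<^sup>2/4) * (u y - u xi)
       + (-(\<epsilon>/2) * cot (angle_at y xi z) + L*\<kappa>*dist xi z/4 + \<sigma>*\<kappa>*(dist xi z)\<^sup>2/4) * (u z - u xi)"
      unfolding G_def o1 o2 h_def du_def ..
    finally show ?thesis using est by simp
  qed
  have A3: "(\<Sum>T\<in>A. \<Sum>v\<in>T-{xi}. G T v) = (\<Sum>v\<in>N. \<Sum>T\<in>{T\<in>\<T>. {xi,v} \<subseteq> T}. G T v)"
  proof -
    have s1: "T - {xi} = {v. v \<in> N \<and> v \<in> T}" if "T \<in> A" for T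
    proof
      show "T - {xi} \<subseteq> {v. v \<in> N \<and> v \<in> T}"
      proof
        fix v assume v: "v \<in> T - {xi}"
        have "{xi,v} \<in> int_edges \<T>" using edge_interior[OF ct sr xiO, of T v] that v A_def by auto
        thus "v \<in> {v. v \<in> N \<and> v \<in> T}" using v unfolding N_def nbrs_def by auto
      qed
      show "{v. v \<in> N \<and> v \<in> T} \<subseteq> T - {xi}" using Nprop by auto
    qed
    have s2: "{T. T \<in> A \<and> v \<in> T} = {T\<in>\<T>. {xi,v} \<subseteq> T}" for v unfolding A_def by auto
    have "(\<Sum>T\<in>A. \<Sum>v\<in>T-{xi}. G T v) = (\<Sum>T\<in>A. \<Sum>v\<in>{v. v \<in> N \<and> v \<in> T}. G T v)"
      using s1 by (intro sum.cong) auto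
    also have "\<dots> = (\<Sum>v\<in>N. \<Sum>T\<in>{T. T \<in> A \<and> v \<in> T}. G T v)"
      by (rule sum.swap_restrict[OF finA finNb])
    also have "\<dots> = (\<Sum>v\<in>N. \<Sum>T\<in>{T\<in>\<T>. {xi,v} \<subseteq> T}. G T v)" unfolding s2 ..
    finally show ?thesis .
  qed
  have A4: "(\<Sum>T\<in>{T\<in>\<T>. {xi,v} \<subseteq> T}. G T v) \<le> (L*\<kappa>*h v/2 + \<sigma>*\<kappa>*(h v)\<^sup>2/2) * du v"
    if v: "v \<in> N" for v
  proof -
    note nv = Nprop[OF v]
    have "card {T\<in>\<T>. {xi,v} \<subseteq> T} = 2" using nv unfolding int_edges_def by auto
    then obtain T1 T2 where T12: "{T\<in>\<T>. {xi,v} \<subseteq> T} = {T1,T2}" "T1 \<noteq> T2" unfolding card_2_iff by blast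
    have T1: "T1 \<in> \<T>" "{xi,v} \<subseteq> T1" and T2: "T2 \<in> \<T>" "{xi,v} \<subseteq> T2" using T12(1) by blast+
    obtain z1 where z1: "T1 = {xi,v,z1}" "z1 \<noteq> xi" "z1 \<noteq> v" using tri_split[OF ct T1(1), of xi v] T1 nv by auto
    obtain z2 where z2: "T2 = {xi,v,z2}" "z2 \<noteq> xi" "z2 \<noteq> v" using tri_split[OF ct T2(1), of xi v] T2 nv by auto
    have cot: "cot (angle_at z1 xi v) + cot (angle_at z2 xi v) \<ge> 0"
      by (rule xz[unfolded xu_zikatanov_def, rule_format, OF T1(1) T2(1)]) (use T12(2) z1 z2 nv in auto)
    have o1: "opp T1 v = z1" unfolding z1(1) by (rule opp_eq) (use z1 in auto)
    have o2: "opp T2 v = z2" unfolding z2(1) by (rule opp_eq) (use z2 in auto)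
    note o = o1 o2
    have "(\<Sum>T\<in>{T\<in>\<T>. {xi,v} \<subseteq> T}. G T v) = G T1 v + G T2 v" unfolding T12(1) using T12(2) by simp
    also have "\<dots> = -(\<epsilon>/2) * (cot (angle_at z1 xi v) + cot (angle_at z2 xi v)) * du v
       + (L*\<kappa>*h v/2 + \<sigma>*\<kappa>*(h v)\<^sup>2/2) * du v" unfolding G_def o by (simp add: algebra_simps)
    also have "\<dots> \<le> (L*\<kappa>*h v/2 + \<sigma>*\<kappa>*(h v)\<^sup>2/2) * du v"
    proof -
      have "0 \<le> (\<epsilon>/2) * (cot (angle_at z1 xi v) + cot (angle_at z2 xi v)) * du v"
        using eps cot nv unfolding du_def by simp
      thus ?thesis by simp
    qed
    finally show ?thesis .
  qed
  have Aest: "a_form \<T> \<epsilon> b \<sigma> u \<psi> \<le> (\<Sum>v\<in>N. (L*\<kappa>*h v/2 + \<sigma>*\<kappa>*(h v)\<^sup>2/2) * du v)"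
  proof -
    have "a_form \<T> \<epsilon> b \<sigma> u \<psi> = (\<Sum>T\<in>A. sT T)" unfolding aform A1 ..
    also have "\<dots> \<le> (\<Sum>T\<in>A. \<Sum>v\<in>T-{xi}. G T v)" by (rule sum_mono) (rule A2)
    also have "\<dots> = (\<Sum>v\<in>N. \<Sum>T\<in>{T\<in>\<T>. {xi,v} \<subseteq> T}. G T v)" by (rule A3)
    also have "\<dots> \<le> (\<Sum>v\<in>N. (L*\<kappa>*h v/2 + \<sigma>*\<kappa>*(h v)\<^sup>2/2) * du v)" by (rule sum_mono) (rule A4)
    finally show ?thesis .
  qed
  define F where "F E = \<gamma>0 * (hE E)\<^sup>2 * alpha_E \<T> p u E * edge_int_tt E u \<psi>" for E
  have eat: "edges_at \<T> xi = (\<lambda>v. {xi,v}) ` N"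
  proof
    show "edges_at \<T> xi \<subseteq> (\<lambda>v. {xi,v}) ` N"
    proof
      fix E assume E: "E \<in> edges_at \<T> xi"
      hence Ei: "E \<in> int_edges \<T>" "xi \<in> E" unfolding edges_at_def by auto
      hence "card E = 2" unfolding int_edges_def edges_def by auto
      then obtain a c where ac: "E = {a,c}" "a \<noteq> c" unfolding card_2_iff by blast
      then obtain v where v: "E = {xi,v}" "v \<noteq> xi" using Ei(2) by auto
      hence "v \<in> N" using Ei(1) unfolding N_def nbrs_def by auto
      thus "E \<in> (\<lambda>v. {xi,v}) ` N" using v by blast
    qed
    show "(\<lambda>v. {xi,v}) ` N \<subseteq> edges_at \<T> xi" using Nprop unfolding edges_at_def by auto
  qed
  have inj: "inj_on (\<lambda>v. {xi,v}) N"
    unfolding inj_on_def using Nprop by (auto simp: doubleton_eq_iff)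
  have Fz: "F E = 0" if E: "E \<in> int_edges \<T> - edges_at \<T> xi" for E
  proof -
    have Ei: "E \<in> int_edges \<T>" "xi \<notin> E" using E unfolding edges_at_def by auto
    then obtain T where T: "T \<in> \<T>" "E \<subseteq> T" "card E = 2" unfolding int_edges_def edges_def by auto
    then obtain a c where ac: "E = {a,c}" "a \<noteq> c" unfolding card_2_iff by blast
    have inT: "a \<in> T" "c \<in> T" using ac(1) T(2) by auto
    have nd: "a \<in> nodes \<T>" "c \<in> nodes \<T>" using nodesI[OF T(1)] inT by auto
    have xa: "a \<noteq> xi" "c \<noteq> xi" using Ei(2) ac(1) by auto
    have "\<psi> a = 0" "\<psi> c = 0" using psi nd xa by auto
    thus ?thesis unfolding F_def ac edge_int_tt_eq by simp
  qed
  have Fv: "F {xi,v} \<le> - \<gamma>0 * h v * du v" if v: "v \<in> N" for v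
  proof -
    note nv = Nprop[OF v]
    have hp: "h v > 0" using nv by (auto simp: h_def)
    have pv: "\<psi> xi = 1" "\<psi> v = 0" using psi xiN nv by auto
    have F1: "F {xi,v} = - \<gamma>0 * h v * alpha_E \<T> p u {xi,v} * du v"
      unfolding F_def hE_eq edge_int_tt_eq pv using hp unfolding h_def du_def by (simp add: field_simps power2_eq_square)
    show ?thesis
    proof (cases "du v = 0")
      case True thus ?thesis unfolding F1 by simp
    next
      case False
      hence "u xi < u v" using nv unfolding du_def by auto
      hence "xi_node \<T> u xi = 1" using xi_node_one[OF _ _ v[unfolded N_def]] finNb Nge unfolding N_def by blast
      hence a1: "alpha_E \<T> p u {xi,v} \<ge> 1" using alpha_ge1 p1 by blast
      have "\<gamma>0 * h v * du v * 1 \<le> \<gamma>0 * h v * du v * alpha_E \<T> p u {xi,v}"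
        using a1 g0 hp nv unfolding du_def by (intro mult_left_mono) auto
      thus ?thesis unfolding F1 by (simp add: algebra_simps)
    qed
  qed
  have finIE: "finite (int_edges \<T>)"
  proof -
    have "int_edges \<T> \<subseteq> Pow (nodes \<T>)" unfolding int_edges_def edges_def nodes_def by auto
    moreover have "finite (Pow (nodes \<T>))" using finN by simp
    ultimately show ?thesis by (rule finite_subset)
  qed
  have Best: "d_form \<T> \<gamma>0 p u u \<psi> \<le> (\<Sum>v\<in>N. - \<gamma>0 * h v * du v)"
  proof -
    have "d_form \<T> \<gamma>0 p u u \<psi> = (\<Sum>E\<in>int_edges \<T>. F E)" unfolding d_form_def F_def ..
    also have "\<dots> = (\<Sum>E\<in>edges_at \<T> xi. F E)"
      by (rule sum.mono_neutral_right[OF finIE]) (auto simp: edges_at_def Fz)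
    also have "\<dots> = (\<Sum>v\<in>N. F {xi,v})" unfolding eat by (rule sum.reindex[OF inj, unfolded comp_def])
    also have "\<dots> \<le> (\<Sum>v\<in>N. - \<gamma>0 * h v * du v)" by (rule sum_mono) (rule Fv)
    finally show ?thesis .
  qed
  define c where "c E = (hE E)\<^sup>2 * (L*\<bar>\<kappa>\<bar>/2 + \<sigma>*\<bar>\<kappa>\<bar>*hE E/2 - \<gamma>0)" for E
  have cneg: "\<forall>E\<in>edges_at \<T> xi. c E < 0"
  proof
    fix E assume E: "E \<in> edges_at \<T> xi"
    then obtain v where v: "v \<in> N" "E = {xi,v}" using eat by blast
    have hp: "hE E > 0" using Nprop[OF v(1)] v(2) hE_eq by auto
    have "E \<in> int_edges \<T>" using E unfolding edges_at_def by auto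
    hence g: "\<gamma>0 > (\<bar>\<kappa>\<bar>/2+1) * \<sigma> * hE E + (\<bar>\<kappa>\<bar>/2+1) * L" using gam L_def by auto
    have "\<bar>\<kappa>\<bar>/2 * \<sigma> * hE E \<le> (\<bar>\<kappa>\<bar>/2+1) * \<sigma> * hE E" using sig hp by (intro mult_right_mono) auto
    moreover have "\<bar>\<kappa>\<bar>/2 * L \<le> (\<bar>\<kappa>\<bar>/2+1) * L" using L0 by (intro mult_right_mono) auto
    ultimately have "L*\<bar>\<kappa>\<bar>/2 + \<sigma>*\<bar>\<kappa>\<bar>*hE E/2 - \<gamma>0 < 0" using g by (simp add: algebra_simps)
    thus "c E < 0" unfolding c_def using hp by (simp add: mult_pos_neg)
  qed
  have Csum: "(\<Sum>E\<in>edges_at \<T> xi. c E * abs_tder E u) = (\<Sum>v\<in>N. (L*\<kappa>*h v/2 + \<sigma>*\<kappa>*(h v)\<^sup>2/2 - \<gamma>0 * h v) * du v)"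
  proof -
    have "(\<Sum>E\<in>edges_at \<T> xi. c E * abs_tder E u) = (\<Sum>v\<in>N. c {xi,v} * abs_tder {xi,v} u)"
      unfolding eat by (rule sum.reindex[OF inj, unfolded comp_def])
    also have "\<dots> = (\<Sum>v\<in>N. (L*\<kappa>*h v/2 + \<sigma>*\<kappa>*(h v)\<^sup>2/2 - \<gamma>0 * h v) * du v)"
    proof (rule sum.cong[OF refl])
      fix v assume v: "v \<in> N"
      note nv = Nprop[OF v]
      have hp: "h v > 0" using nv by (auto simp: h_def)
      have "\<bar>u v - u xi\<bar> = du v" using nv unfolding du_def by simp
      thus "c {xi,v} * abs_tder {xi,v} u = (L*\<kappa>*h v/2 + \<sigma>*\<kappa>*(h v)\<^sup>2/2 - \<gamma>0 * h v) * du v"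
        unfolding c_def hE_eq abs_tder_eq kabs using hp unfolding h_def
        by (simp add: field_simps power2_eq_square)
    qed
    finally show ?thesis .
  qed
  have "a_tilde \<T> \<epsilon> b \<sigma> \<gamma>0 p u \<psi> = a_form \<T> \<epsilon> b \<sigma> u \<psi> + d_form \<T> \<gamma>0 p u u \<psi>"
    unfolding a_tilde_def ..
  also have "\<dots> \<le> (\<Sum>v\<in>N. (L*\<kappa>*h v/2 + \<sigma>*\<kappa>*(h v)\<^sup>2/2) * du v) + (\<Sum>v\<in>N. - \<gamma>0 * h v * du v)"
    using Aest Best by (rule add_mono)
  also have "\<dots> = (\<Sum>v\<in>N. (L*\<kappa>*h v/2 + \<sigma>*\<kappa>*(h v)\<^sup>2/2 - \<gamma>0 * h v) * du v)"
    by (simp add: sum.distrib[symmetric] algebra_simps)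
  also have "\<dots> = (\<Sum>E\<in>edges_at \<T> xi. c E * abs_tder E u)" using Csum by simp
  finally show ?thesis using cneg by blast
qed



lemma neg_Vh: "u \<in> Vh \<T> \<Longrightarrow> (\<lambda>x. - u x) \<in> Vh \<T>"
proof -
  assume u: "u \<in> Vh \<T>"
  have c: "continuous_on (\<Union>T\<in>\<T>. convex hull T) (\<lambda>x. - u x)"
    using u unfolding Vh_def by (auto intro: continuous_on_minus)
  have "\<forall>T\<in>\<T>. \<exists>g c. \<forall>x\<in>convex hull T. - u x = g \<bullet> x + c"
  proof
    fix T assume "T \<in> \<T>"
    then obtain g k where "\<forall>x\<in>convex hull T. u x = g \<bullet> x + k" using u unfolding Vh_def by blast
    hence "\<forall>x\<in>convex hull T. - u x = (-g) \<bullet> x + (-k)" by simp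
    thus "\<exists>g c. \<forall>x\<in>convex hull T. - u x = g \<bullet> x + c" by blast
  qed
  thus ?thesis using c unfolding Vh_def by blast
qed

lemma tgrad_neg:
  assumes ct: "conforming_triangulation \<T>" and sr: "shape_regular \<kappa> \<T>" and u: "u \<in> Vh \<T>" and T: "T \<in> \<T>"
  shows "tgrad T (\<lambda>x. - u x) = - tgrad T u"
proof -
  obtain a1 a2 a3 where abc: "T = {a1,a2,a3}" "a1 \<noteq> a2"
    using tri_card3(1)[OF ct T] card_3_iff by metis
  have T': "{a1,a2,a3} \<in> \<T>" using T unfolding abc(1) .
  have D: "cr (a2-a1) (a3-a1) \<noteq> 0" by (rule tri_nondeg(1)[OF sr T' abc(2)])
  obtain g k where gk: "\<forall>x\<in>convex hull {a1,a2,a3}. u x = g \<bullet> x + k" using vh_aff[OF u T] unfolding abc(1) by blast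
  have gk': "\<forall>x\<in>convex hull {a1,a2,a3}. - u x = (-g) \<bullet> x + (-k)" using gk by simp
  show ?thesis unfolding abc(1) tgrad_eq[OF D gk] tgrad_eq[OF D gk'] ..
qed

lemma a_form_neg:
  assumes ct: "conforming_triangulation \<T>" and sr: "shape_regular \<kappa> \<T>" and u: "u \<in> Vh \<T>"
  shows "a_form \<T> \<epsilon> b \<sigma> (\<lambda>x. - u x) \<psi> = - a_form \<T> \<epsilon> b \<sigma> u \<psi>"
  unfolding a_form_def sum_negf[symmetric]
proof (rule sum.cong[OF refl])
  fix T assume T: "T \<in> \<T>"
  note tg = tgrad_neg[OF ct sr u T]
  show "\<epsilon> * (LINT x:convex hull T|lebesgue. tgrad T (\<lambda>x. - u x) \<bullet> tgrad T \<psi>) +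
         (LINT x:convex hull T|lebesgue. (b x \<bullet> tgrad T (\<lambda>x. - u x)) * \<psi> x) +
         \<sigma> * (LINT x:convex hull T|lebesgue. - u x * \<psi> x) =
         - (\<epsilon> * (LINT x:convex hull T|lebesgue. tgrad T u \<bullet> tgrad T \<psi>) +
            (LINT x:convex hull T|lebesgue. (b x \<bullet> tgrad T u) * \<psi> x) +
            \<sigma> * (LINT x:convex hull T|lebesgue. u x * \<psi> x))"
    unfolding tg by (simp add: set_int_neg)
qed

lemma xi_node_neg: "xi_node \<T> (\<lambda>x. - u x) = xi_node \<T> u"
proof
  fix x
  have "(\<Sum>y\<in>nbrs \<T> x. - u x - - u y) = (\<Sum>y\<in>nbrs \<T> x. - (u x - u y))"
    by (intro sum.cong) auto
  also have "\<dots> = - (\<Sum>y\<in>nbrs \<T> x. u x - u y)" by (rule sum_negf)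
  finally have "(\<Sum>y\<in>nbrs \<T> x. - u x - - u y) = - (\<Sum>y\<in>nbrs \<T> x. u x - u y)" .
  moreover have "(\<Sum>y\<in>nbrs \<T> x. \<bar>- u x - - u y\<bar>) = (\<Sum>y\<in>nbrs \<T> x. \<bar>u x - u y\<bar>)"
    by (simp add: abs_minus_commute)
  ultimately show "xi_node \<T> (\<lambda>x. - u x) x = xi_node \<T> u x" unfolding xi_node_def Let_def by simp
qed

lemma d_form_neg:
  "d_form \<T> \<gamma>0 p (\<lambda>x. - u x) (\<lambda>x. - u x) \<psi> = - d_form \<T> \<gamma>0 p u u \<psi>"
  unfolding d_form_def sum_negf[symmetric]
proof (rule sum.cong[OF refl])
  fix E assume E: "E \<in> int_edges \<T>"
  hence "card E = 2" unfolding int_edges_def edges_def by auto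
  then obtain a c where ac: "E = {a,c}" unfolding card_2_iff by blast
  have al: "alpha_E \<T> p (\<lambda>x. - u x) E = alpha_E \<T> p u E" unfolding alpha_E_def xi_node_neg ..
  have e: "(- u c - - u a) / dist a c = - ((u c - u a) / dist a c)" by (simp add: minus_divide_left)
  have "edge_int_tt E (\<lambda>x. - u x) \<psi> = - edge_int_tt E u \<psi>" unfolding ac edge_int_tt_eq e by simp
  thus "\<gamma>0 * (hE E)\<^sup>2 * alpha_E \<T> p (\<lambda>x. - u x) E * edge_int_tt E (\<lambda>x. - u x) \<psi> =
        - (\<gamma>0 * (hE E)\<^sup>2 * alpha_E \<T> p u E * edge_int_tt E u \<psi>)" unfolding al by simp
qed

lemma abs_tder_neg: "E \<in> edges_at \<T> x \<Longrightarrow> abs_tder E (\<lambda>x. - u x) = abs_tder E u"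
proof -
  assume "E \<in> edges_at \<T> x"
  hence "card E = 2" unfolding edges_at_def int_edges_def edges_def by auto
  then obtain a c where ac: "E = {a,c}" unfolding card_2_iff by blast
  show ?thesis unfolding ac abs_tder_eq by (simp add: abs_minus_commute)
qed

lemma max_case:
  assumes ct: "conforming_triangulation \<T>" and sr: "shape_regular \<kappa> \<T>" and xz: "xu_zikatanov \<T>"
   and eps: "\<epsilon> > 0" and sig: "\<sigma> \<ge> 0" and g0: "\<gamma>0 > 0" and p1: "p \<ge> 1"
   and lf: "Linf_field (dom_of \<T>) b"
   and gam: "\<forall>E\<in>int_edges \<T>. \<gamma>0 > (\<bar>\<kappa>\<bar>/2+1) * \<sigma> * hE E + (\<bar>\<kappa>\<bar>/2+1) * Linf_norm (dom_of \<T>) b"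
   and u: "u \<in> Vh \<T>" and \<psi>: "\<psi> \<in> Vh \<T>" and xi: "interior_node \<T> xi"
   and psi: "\<forall>y\<in>nodes \<T>. \<psi> y = (if y = xi then 1 else 0)"
   and umax: "\<forall>x\<in>patch \<T> xi. u xi \<ge> u x" and sgn: "u xi > 0 \<or> \<sigma> = 0"
  shows "\<exists>c. (\<forall>E\<in>edges_at \<T> xi. c E < 0) \<and>
           a_tilde \<T> \<epsilon> b \<sigma> \<gamma>0 p u \<psi> \<ge> - (\<Sum>E\<in>edges_at \<T> xi. c E * abs_tder E u)"
proof -
    have M1: "\<forall>x\<in>patch \<T> xi. - u xi \<le> - u x" and M2: "- u xi < 0 \<or> \<sigma> = 0" using umax sgn by auto
    obtain c where c: "\<forall>E\<in>edges_at \<T> xi. c E < 0"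
      "a_tilde \<T> \<epsilon> b \<sigma> \<gamma>0 p (\<lambda>x. - u x) \<psi> \<le> (\<Sum>E\<in>edges_at \<T> xi. c E * abs_tder E (\<lambda>x. - u x))"
      using min_case[OF ct sr xz eps sig g0 p1 lf gam neg_Vh[OF u] \<psi> xi psi M1 M2] by blast
    have "a_tilde \<T> \<epsilon> b \<sigma> \<gamma>0 p (\<lambda>x. - u x) \<psi> = - a_tilde \<T> \<epsilon> b \<sigma> \<gamma>0 p u \<psi>"
      unfolding a_tilde_def a_form_neg[OF ct sr u] d_form_neg by simp
    moreover have "(\<Sum>E\<in>edges_at \<T> xi. c E * abs_tder E (\<lambda>x. - u x)) = (\<Sum>E\<in>edges_at \<T> xi. c E * abs_tder E u)"
      by (rule sum.cong[OF refl]) (simp add: abs_tder_neg)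
    ultimately have "- a_tilde \<T> \<epsilon> b \<sigma> \<gamma>0 p u \<psi> \<le> (\<Sum>E\<in>edges_at \<T> xi. c E * abs_tder E u)" using c(2) by simp
    hence "a_tilde \<T> \<epsilon> b \<sigma> \<gamma>0 p u \<psi> \<ge> - (\<Sum>E\<in>edges_at \<T> xi. c E * abs_tder E u)" by simp
    thus ?thesis using c(1) by blast
qed

theorem theorem2p2:
  fixes \<kappa> :: real
  shows "\<exists>C0 C1. C0 > 0 \<and> C1 > 0 \<and>
    (\<forall>\<T> (\<epsilon>::real) (b::pt \<Rightarrow> pt) (\<sigma>::real) (\<gamma>0::real) (p::real).
      conforming_triangulation \<T> \<and> shape_regular \<kappa> \<T> \<and> xu_zikatanov \<T> \<and>
      \<epsilon> > 0 \<and> \<sigma> \<ge> 0 \<and> \<gamma>0 > 0 \<and> p \<ge> 1 \<and>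
      Linf_field (dom_of \<T>) b \<and> div_free (dom_of \<T>) b \<and>
      (\<forall>E\<in>int_edges \<T>. \<gamma>0 > C0 * \<sigma> * hE E + C1 * Linf_norm (dom_of \<T>) b)
      \<longrightarrow>
      (\<forall>u \<psi> xi. u \<in> Vh \<T> \<and> \<psi> \<in> Vh \<T> \<and> interior_node \<T> xi \<and>
         (\<forall>y\<in>nodes \<T>. \<psi> y = (if y = xi then 1 else 0)) \<longrightarrow>
         (((\<forall>x\<in>patch \<T> xi. u xi \<le> u x) \<and> (u xi < 0 \<or> \<sigma> = 0)) \<longrightarrow>
            (\<exists>c. (\<forall>E\<in>edges_at \<T> xi. c E < 0) \<and>
               a_tilde \<T> \<epsilon> b \<sigma> \<gamma>0 p u \<psi> \<le> (\<Sum>E\<in>edges_at \<T> xi. c E * abs_tder E u))) \<and>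
         (((\<forall>x\<in>patch \<T> xi. u xi \<ge> u x) \<and> (u xi > 0 \<or> \<sigma> = 0)) \<longrightarrow>
            (\<exists>c. (\<forall>E\<in>edges_at \<T> xi. c E < 0) \<and>
               a_tilde \<T> \<epsilon> b \<sigma> \<gamma>0 p u \<psi> \<ge> - (\<Sum>E\<in>edges_at \<T> xi. c E * abs_tder E u)))))"
proof (intro exI[of _ "\<bar>\<kappa>\<bar>/2+1"] conjI allI impI)
  show "0 < \<bar>\<kappa>\<bar>/2+1" by (simp add: add_nonneg_pos)
  show "0 < \<bar>\<kappa>\<bar>/2+1" by (simp add: add_nonneg_pos)
next
  fix \<T> :: "pt set set" and \<epsilon> :: real and b :: "pt \<Rightarrow> pt" and \<sigma> \<gamma>0 p :: real
    and u \<psi> :: "pt \<Rightarrow> real" and xi :: pt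
  assume H: "conforming_triangulation \<T> \<and> shape_regular \<kappa> \<T> \<and> xu_zikatanov \<T> \<and>
      \<epsilon> > 0 \<and> \<sigma> \<ge> 0 \<and> \<gamma>0 > 0 \<and> p \<ge> 1 \<and>
      Linf_field (dom_of \<T>) b \<and> div_free (dom_of \<T>) b \<and>
      (\<forall>E\<in>int_edges \<T>. \<gamma>0 > (\<bar>\<kappa>\<bar>/2+1) * \<sigma> * hE E + (\<bar>\<kappa>\<bar>/2+1) * Linf_norm (dom_of \<T>) b)"
  and U: "u \<in> Vh \<T> \<and> \<psi> \<in> Vh \<T> \<and> interior_node \<T> xi \<and> (\<forall>y\<in>nodes \<T>. \<psi> y = (if y = xi then 1 else 0))"
  and M: "(\<forall>x\<in>patch \<T> xi. u xi \<le> u x) \<and> (u xi < 0 \<or> \<sigma> = 0)"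
  show "\<exists>c. (\<forall>E\<in>edges_at \<T> xi. c E < 0) \<and>
               a_tilde \<T> \<epsilon> b \<sigma> \<gamma>0 p u \<psi> \<le> (\<Sum>E\<in>edges_at \<T> xi. c E * abs_tder E u)"
    by (rule min_case[where \<kappa>=\<kappa>]) (use H U M in auto)
next
  fix \<T> :: "pt set set" and \<epsilon> :: real and b :: "pt \<Rightarrow> pt" and \<sigma> \<gamma>0 p :: real
    and u \<psi> :: "pt \<Rightarrow> real" and xi :: pt
  assume H: "conforming_triangulation \<T> \<and> shape_regular \<kappa> \<T> \<and> xu_zikatanov \<T> \<and>
      \<epsilon> > 0 \<and> \<sigma> \<ge> 0 \<and> \<gamma>0 > 0 \<and> p \<ge> 1 \<and>
      Linf_field (dom_of \<T>) b \<and> div_free (dom_of \<T>) b \<and>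
      (\<forall>E\<in>int_edges \<T>. \<gamma>0 > (\<bar>\<kappa>\<bar>/2+1) * \<sigma> * hE E + (\<bar>\<kappa>\<bar>/2+1) * Linf_norm (dom_of \<T>) b)"
  and U: "u \<in> Vh \<T> \<and> \<psi> \<in> Vh \<T> \<and> interior_node \<T> xi \<and> (\<forall>y\<in>nodes \<T>. \<psi> y = (if y = xi then 1 else 0))"
  and M: "(\<forall>x\<in>patch \<T> xi. u xi \<ge> u x) \<and> (u xi > 0 \<or> \<sigma> = 0)"
  show "\<exists>c. (\<forall>E\<in>edges_at \<T> xi. c E < 0) \<and>
               a_tilde \<T> \<epsilon> b \<sigma> \<gamma>0 p u \<psi> \<ge> - (\<Sum>E\<in>edges_at \<T> xi. c E * abs_tder E u)"
    by (rule max_case[where \<kappa>=\<kappa>]) (use H U M in auto)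
qed


end
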